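(* Let $\Gamma<\mathrm{PSL}_2(\mathbb{C})$ be discrete, co-compact and torsion-free, $f:\mathbb{R}/2\pi\mathbb{Z}\to\mathbb{R}$ smooth with $\hat f(0)=0$, $0<\eta\le\eta_0$, $T>0$, and let $h:\mathbb{R}\to\mathbb{C}$ be continuous. Let $(s_1,p_1),\dots,(s_n,p_n)$ be the distinct pairs with $s_j\neq0$, $|s_j|,|p_j|<T$ and $m_\Gamma(\pi_{is_j,p_j})\neq0$. Then \[\lim_{Y\to\infty}\frac1Y\int_{\eta_0}^Yh\big(E^{(T)}[f,g_{y,\eta}]\big)\,dy=\int_Ah_{T,f,\eta}(a)\,da=\int_{\mathbb{R}}h(x)\,d\mu_{T,f,\eta}(x),\] where $A$ is the closure of $\{(s_1y/2\pi,\dots,s_ny/2\pi):y\in\mathbb{R}\}$ in $\mathbb{T}^n=\mathbb{R}^n/\mathbb{Z}^n$, which is a subtorus, and $da$ is the Haar probability measure on $A$.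
   Context: $G=\mathrm{PSL}_2(\mathbb{C})$. $\pi_{is,p}$ ($s\in\mathbb{R},p\in\mathbb{Z}$) is the unitary principal series representation induced from $\begin{pmatrix}e^{(u+i\theta)/2}&*\\0&e^{-(u+i\theta)/2}\end{pmatrix}\mapsto e^{ius+ip\theta}$; $m_\Gamma(\pi)$ is the multiplicity in $L^2(\Gamma\backslash G)$ and $s$ is called a spectral parameter. $\hat f(p)=\frac1{2\pi}\int_0^{2\pi}f(\theta)e^{-ip\theta}d\theta$. Fix smooth even nonnegative $\psi$ supported in $[-1,1]$, $\int\psi=1$; $\psi_\eta(t)=\eta^{-1}\psi(t/\eta)$; $c_{s,\eta}=\int\psi_\eta(t)\frac{e^{t(1+is)}}{1+is}dt$; $b_{f,\eta}=\big(\sum_{p\ne0}m_\Gamma(\pi_{0,p})\mathrm{Re}\,\hat f(p)-2\mathrm{Re}\,\hat f(1)\big)2c_{0,\eta}$. Define $E^{(T)}[f,g_{y,\eta}]=2\sum_{|s|,|p|<T,\ s\neq0}m_\Gamma(\pi_{is,p})\mathrm{Re}\big(\hat f(-p)e^{isy}c_{s,\eta}\big)+b_{f,\eta}$ (sum over principal series in $L^2(\Gamma\backslash G)$), $w_{T}(x_1,\dots,x_n)=2\sum_{j=1}^nm_\Gamma(\pi_{is_j,p_j})\mathrm{Re}\big(\hat f(-p_j)e^{2\pi ix_j}c_{s_j,\eta}\big)+b_{f,\eta}$ on $\mathbb{T}^n$, $h_{T,f,\eta}=h\circ w_T$, and $\mu_{T,f,\eta}$ the pushforward of the Haar probability measure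 on $A$ under $w_T|_A$ (a probability measure on $\mathbb{R}$). *)

theory Defs
  imports "HOL-Analysis.Analysis" "HOL-Probability.Probability"
begin

definition fhat :: "(real \<Rightarrow> real) \<Rightarrow> int \<Rightarrow> complex" where
  "fhat f p = (1 / (2 * pi)) *
     integral {0..2*pi} (\<lambda>\<theta>. complex_of_real (f \<theta>) * exp (- \<i> * of_int p * complex_of_real \<theta>))"

definition psi_eta :: "(real \<Rightarrow> real) \<Rightarrow> real \<Rightarrow> real \<Rightarrow> real" where
  "psi_eta \<psi> \<eta> t = \<psi> (t / \<eta>) / \<eta>"

definition c_se :: "(real \<Rightarrow> real) \<Rightarrow> real \<Rightarrow> real \<Rightarrow> complex" where
  "c_se \<psi> \<eta> s = integral UNIV (\<lambda>t. complex_of_real (psi_eta \<psi> \<eta> t) *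
       exp (complex_of_real t * (1 + \<i> * complex_of_real s)) / (1 + \<i> * complex_of_real s))"

text \<open>Abstract multiplicity data: m s p stands for the multiplicity of pi_{is,p} in L^2(Gamma\G).\<close>
definition b_const :: "(real \<Rightarrow> int \<Rightarrow> nat) \<Rightarrow> (real \<Rightarrow> real) \<Rightarrow> (real \<Rightarrow> real) \<Rightarrow> real \<Rightarrow> real" where
  "b_const m f \<psi> \<eta> =
     ((\<Sum>\<^sub>\<infinity>p\<in>-{0}. real (m 0 p) * Re (fhat f p)) - 2 * Re (fhat f 1)) * (2 * Re (c_se \<psi> \<eta> 0))"

definition spec_set :: "(real \<Rightarrow> int \<Rightarrow> nat) \<Rightarrow> real \<Rightarrow> (real \<times> int) set" where
  "spec_set m T = {(s, p). s \<noteq> 0 \<and> \<bar>s\<bar> < T \<and> \<bar>real_of_int p\<bar> < T \<and> m s p \<noteq> 0}"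

definition E_T :: "(real \<Rightarrow> int \<Rightarrow> nat) \<Rightarrow> (real \<Rightarrow> real) \<Rightarrow> (real \<Rightarrow> real) \<Rightarrow> real \<Rightarrow> real \<Rightarrow> real \<Rightarrow> real" where
  "E_T m f \<psi> \<eta> T y =
     2 * (\<Sum>(s, p)\<in>spec_set m T. real (m s p) *
            Re (fhat f (- p) * exp (\<i> * complex_of_real (s * y)) * c_se \<psi> \<eta> s))
     + b_const m f \<psi> \<eta>"

text \<open>The torus T^J = R^J / Z^J, represented by the fundamental domain [0,1)^J
  (extensional functions on J).\<close>
definition torus_pts :: "'a set \<Rightarrow> ('a \<Rightarrow> real) set" where
  "torus_pts J = PiE J (\<lambda>_. {0..<1})"

definition torus_borel :: "'a set \<Rightarrow> ('a \<Rightarrow> real) measure" where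
  "torus_borel J = PiM J (\<lambda>_. borel)"

definition torus_add :: "'a set \<Rightarrow> ('a \<Rightarrow> real) \<Rightarrow> ('a \<Rightarrow> real) \<Rightarrow> ('a \<Rightarrow> real)" where
  "torus_add J a x = (\<lambda>j\<in>J. frac (x j + a j))"

definition dist_mod1 :: "real \<Rightarrow> real \<Rightarrow> real" where
  "dist_mod1 a b = \<bar>(a - b) - of_int (round (a - b))\<bar>"

definition orbit_closure :: "'a set \<Rightarrow> ('a \<Rightarrow> real) \<Rightarrow> ('a \<Rightarrow> real) set" where
  "orbit_closure J freq = {x \<in> torus_pts J. \<forall>e>0. \<exists>y::real. \<forall>j\<in>J.
       dist_mod1 (x j) (freq j * y / (2 * pi)) < e}"

definition is_haar_prob :: "'a set \<Rightarrow> ('a \<Rightarrow> real) set \<Rightarrow> ('a \<Rightarrow> real) measure \<Rightarrow> bool" where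
  "is_haar_prob J A \<mu> \<longleftrightarrow> sets \<mu> = sets (torus_borel J) \<and> prob_space \<mu> \<and>
     A \<in> sets \<mu> \<and> emeasure \<mu> A = 1 \<and>
     (\<forall>a\<in>A. distr \<mu> (torus_borel J) (torus_add J a) = \<mu>)"

definition haar_prob :: "'a set \<Rightarrow> ('a \<Rightarrow> real) set \<Rightarrow> ('a \<Rightarrow> real) measure" where
  "haar_prob J A = (THE \<mu>. is_haar_prob J A \<mu>)"

definition w_T :: "(real \<Rightarrow> int \<Rightarrow> nat) \<Rightarrow> (real \<Rightarrow> real) \<Rightarrow> (real \<Rightarrow> real) \<Rightarrow> real \<Rightarrow> real \<Rightarrow> ((real \<times> int) \<Rightarrow> real) \<Rightarrow> real" where
  "w_T m f \<psi> \<eta> T x =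
     2 * (\<Sum>j\<in>spec_set m T. real (m (fst j) (snd j)) *
            Re (fhat f (- snd j) * exp (2 * pi * \<i> * complex_of_real (x j)) * c_se \<psi> \<eta> (fst j)))
     + b_const m f \<psi> \<eta>"

end

theory Submission
  imports Defs "HOL-Real_Asymp.Real_Asymp"
begin



definition dm :: "real \<Rightarrow> real" where "dm t = \<bar>t - of_int (round t)\<bar>"

lemma dist_mod1_dm: "dist_mod1 a b = dm (a - b)"
  by (simp add: dist_mod1_def dm_def)

lemma dm_nonneg: "0 \<le> dm t" by (simp add: dm_def)

lemma dm_le: "dm t \<le> \<bar>t - of_int k\<bar>"
proof -
  have r: "\<bar>of_int (round t) - t\<bar> \<le> 1/2" by (rule of_int_round_abs_le)
  show ?thesis
  proof (cases "k = round t")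
    case True then show ?thesis by (simp add: dm_def)
  next
    case False
    then have "\<bar>of_int k - of_int (round t)\<bar> \<ge> (1::real)"
      by (metis of_int_1_le_iff of_int_abs of_int_diff right_minus_eq zero_less_abs_iff int_one_le_iff_zero_less)
    then show ?thesis using r unfolding dm_def by linarith
  qed
qed

lemma dm_le_half: "dm t \<le> 1/2"
  using of_int_round_abs_le[of t] by (simp add: dm_def abs_minus_commute)

lemma dm_shift: "dm (t + of_int k) = dm t"
proof -
  have "dm (t + of_int k) \<le> dm t"
    using dm_le[of "t + of_int k" "round t + k"] by (simp add: dm_def)
  moreover have "dm t \<le> dm (t + of_int k)"
    using dm_le[of t "round (t + of_int k) - k"] by (simp add: dm_def)
  ultimately show ?thesis by simp
qed

lemma dm_shift': "dm (t - of_int k) = dm t"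
  using dm_shift[of t "-k"] by simp

lemma dm_minus: "dm (- t) = dm t"
proof -
  have "dm (- t) \<le> dm t" using dm_le[of "-t" "- round t"] by (simp add: dm_def abs_minus_commute)
  moreover have "dm t \<le> dm (-t)" using dm_le[of "t" "- round (-t)"] by (simp add: dm_def abs_minus_commute)
  ultimately show ?thesis by simp
qed

lemma dm_triangle: "dm (t + u) \<le> dm t + dm u"
  using dm_le[of "t+u" "round t + round u"] by (simp add: dm_def)

lemma dm_lip: "dm t \<le> dm u + \<bar>t - u\<bar>"
  using dm_le[of t "round u"] by (simp add: dm_def)

lemma dm_lip_abs: "\<bar>dm t - dm u\<bar> \<le> \<bar>t - u\<bar>"
  using dm_lip[of t u] dm_lip[of u t] by (simp add: abs_minus_commute)

lemma dm_le_abs: "dm t \<le> \<bar>t\<bar>"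
  using dm_le[of t 0] by simp

lemma dm_frac: "dm (frac t) = dm t"
  unfolding frac_def using dm_shift'[of t "\<lfloor>t\<rfloor>"] by simp

lemma dm_zero_iff: "dm t = 0 \<longleftrightarrow> t \<in> \<int>"
proof
  assume "dm t = 0" then have "t = of_int (round t)" by (simp add: dm_def)
  then show "t \<in> \<int>" by (metis Ints_of_int)
next
  assume "t \<in> \<int>" then obtain k where "t = of_int k" by (auto elim: Ints_cases)
  then show "dm t = 0" using dm_le[of t k] dm_nonneg[of t] by simp
qed

lemma dm_int_mult: "dm (of_int k * t) \<le> \<bar>of_int k\<bar> * dm t"
proof -
  have "dm (of_int k * t) \<le> \<bar>of_int k * t - of_int (k * round t)\<bar>" by (rule dm_le)
  also have "\<dots> = \<bar>of_int k\<bar> * dm t" by (simp add: dm_def abs_mult[symmetric] algebra_simps)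
  finally show ?thesis .
qed

lemma continuous_dm: "continuous_on UNIV dm"
  unfolding continuous_on_iff
  by (metis dist_real_def dm_lip_abs le_less_trans)

lemma dm_measurable[measurable]: "dm \<in> borel_measurable borel"
  using continuous_dm by (rule borel_measurable_continuous_onI)

lemma frac_measurable[measurable]: "(frac :: real \<Rightarrow> real) \<in> borel_measurable borel"
  unfolding frac_def by measurable

section \<open>Uniqueness of the Haar measure\<close>

lemma torus_add_comm: "torus_add J a x = torus_add J x a"
  by (simp add: torus_add_def add.commute)

lemma torus_add_measurable[measurable]:
  "torus_add J a \<in> measurable (torus_borel J) (torus_borel J)"
  unfolding torus_add_def torus_borel_def by measurable

lemma torus_add_measurable2:
  "(\<lambda>p. torus_add J (fst p) (snd p)) \<in> measurable (torus_borel J \<Otimes>\<^sub>M torus_borel J) (torus_borel J)"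
  unfolding torus_add_def torus_borel_def by measurable

lemma haar_unique:
  assumes m: "is_haar_prob J A \<mu>" and n: "is_haar_prob J A \<nu>"
  shows "\<mu> = \<nu>"
proof -
  have sm: "sets \<mu> = sets (torus_borel J)" and pm: "prob_space \<mu>" and Am: "A \<in> sets \<mu>"
    and Am1: "emeasure \<mu> A = 1" and im: "\<And>a. a \<in> A \<Longrightarrow> distr \<mu> (torus_borel J) (torus_add J a) = \<mu>"
    using m unfolding is_haar_prob_def by auto
  have sn: "sets \<nu> = sets (torus_borel J)" and pn: "prob_space \<nu>" and An: "A \<in> sets \<nu>"
    and An1: "emeasure \<nu> A = 1" and inn: "\<And>a. a \<in> A \<Longrightarrow> distr \<nu> (torus_borel J) (torus_add J a) = \<nu>"
    using n unfolding is_haar_prob_def by auto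
  interpret M: prob_space \<mu> by (rule pm)
  interpret N: prob_space \<nu> by (rule pn)
  interpret P: pair_sigma_finite \<mu> \<nu> ..
  have spm: "space \<mu> = space (torus_borel J)" using sm by (rule sets_eq_imp_space_eq)
  have spn: "space \<nu> = space (torus_borel J)" using sn by (rule sets_eq_imp_space_eq)
  have aeM: "AE x in \<mu>. x \<in> A" using Am Am1 M.prob_eq_1 by (simp add: M.emeasure_eq_measure)
  have aeN: "AE x in \<nu>. x \<in> A" using An An1 N.prob_eq_1 by (simp add: N.emeasure_eq_measure)
  have AsubM: "A \<subseteq> space \<mu>" using Am sets.sets_into_space by blast
  have AsubN: "A \<subseteq> space \<nu>" using An sets.sets_into_space by blast
  have measP: "(\<lambda>p. torus_add J (fst p) (snd p)) \<in> measurable (\<mu> \<Otimes>\<^sub>M \<nu>) (torus_borel J)"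
    using torus_add_measurable2[of J]
    by (simp add: measurable_def space_pair_measure spm spn sets_pair_measure_cong[OF sm sn])
  show ?thesis
  proof (rule measure_eqI)
    show "sets \<mu> = sets \<nu>" using sm sn by simp
  next
    fix B assume B: "B \<in> sets \<mu>"
    have B': "B \<in> sets (torus_borel J)" using B sm by simp
    define S where "S = (\<lambda>p. torus_add J (fst p) (snd p)) -` B \<inter> space (\<mu> \<Otimes>\<^sub>M \<nu>)"
    have S: "S \<in> sets (\<mu> \<Otimes>\<^sub>M \<nu>)" unfolding S_def using measP B' by (rule measurable_sets)
    have eq1: "emeasure \<nu> (Pair x -` S) = emeasure \<nu> B" if x: "x \<in> A" for x
    proof -
      have "Pair x -` S = torus_add J x -` B \<inter> space \<nu>"
        using x AsubM by (auto simp: S_def space_pair_measure)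
      also have "emeasure \<nu> \<dots> = emeasure (distr \<nu> (torus_borel J) (torus_add J x)) B"
        by (rule emeasure_distr[symmetric]) (use B' measurable_cong_sets[OF sn refl, of "torus_borel J"] in auto)
      also have "\<dots> = emeasure \<nu> B" using inn x by simp
      finally show ?thesis .
    qed
    have eq2: "emeasure \<mu> ((\<lambda>x. (x, y)) -` S) = emeasure \<mu> B" if y: "y \<in> A" for y
    proof -
      have "(\<lambda>x. (x, y)) -` S = torus_add J y -` B \<inter> space \<mu>"
        using y AsubN by (auto simp: S_def space_pair_measure torus_add_comm[of J y])
      also have "emeasure \<mu> \<dots> = emeasure (distr \<mu> (torus_borel J) (torus_add J y)) B"
        by (rule emeasure_distr[symmetric]) (use B' measurable_cong_sets[OF sm refl, of "torus_borel J"] in auto)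
      also have "\<dots> = emeasure \<mu> B" using im y by simp
      finally show ?thesis .
    qed
    have "emeasure (\<mu> \<Otimes>\<^sub>M \<nu>) S = (\<integral>\<^sup>+x. emeasure \<nu> (Pair x -` S) \<partial>\<mu>)"
      by (rule N.emeasure_pair_measure_alt[OF S])
    also have "\<dots> = (\<integral>\<^sup>+x. emeasure \<nu> B \<partial>\<mu>)"
      by (rule nn_integral_cong_AE) (use aeM eq1 in auto)
    also have "\<dots> = emeasure \<nu> B" by (simp add: M.emeasure_space_1)
    finally have 1: "emeasure (\<mu> \<Otimes>\<^sub>M \<nu>) S = emeasure \<nu> B" .
    have "emeasure (\<mu> \<Otimes>\<^sub>M \<nu>) S = (\<integral>\<^sup>+y. emeasure \<mu> ((\<lambda>x. (x, y)) -` S) \<partial>\<nu>)"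
      by (rule P.emeasure_pair_measure_alt2[OF S])
    also have "\<dots> = (\<integral>\<^sup>+y. emeasure \<mu> B \<partial>\<nu>)"
      by (rule nn_integral_cong_AE) (use aeN eq2 in auto)
    also have "\<dots> = emeasure \<mu> B" by (simp add: N.emeasure_space_1)
    finally show "emeasure \<mu> B = emeasure \<nu> B" using 1 by simp
  qed
qed

lemma haar_prob_eq:
  assumes "is_haar_prob J A \<mu>" shows "haar_prob J A = \<mu>"
  unfolding haar_prob_def using assms haar_unique by blast




definition chi :: "'a set \<Rightarrow> ('a \<Rightarrow> int) \<Rightarrow> ('a \<Rightarrow> real) \<Rightarrow> complex" where
  "chi J k x = iexp (2 * pi * (\<Sum>j\<in>J. of_int (k j) * x j))"

lemma iexp_int: "n \<in> \<int> \<Longrightarrow> iexp (2 * pi * n) = 1"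
  using cis_multiple_2pi[of n] by (simp add: cis_conv_exp)

lemma iexp_add: "iexp (a + b) = iexp a * iexp b"
  by (simp add: distrib_left exp_add)

lemma meas_sets_eq: "sets M = sets M' \<Longrightarrow> f \<in> measurable M' N \<Longrightarrow> f \<in> measurable M N"
  using measurable_cong_sets[of M M' N N] by simp

lemma chi_int_shift:
  assumes "\<And>j. j \<in> J \<Longrightarrow> x j - y j \<in> \<int>"
  shows "chi J k x = chi J k y"
proof -
  have "(\<Sum>j\<in>J. of_int (k j) * x j) = (\<Sum>j\<in>J. of_int (k j) * y j) + (\<Sum>j\<in>J. of_int (k j) * (x j - y j))"
    by (simp add: sum.distrib[symmetric] algebra_simps)
  moreover have "(\<Sum>j\<in>J. of_int (k j) * (x j - y j)) \<in> \<int>"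
    using assms by (intro Ints_sum Ints_mult) auto
  ultimately have "2 * pi * (\<Sum>j\<in>J. of_int (k j) * x j) = 2 * pi * (\<Sum>j\<in>J. of_int (k j) * y j) + 2 * pi * (\<Sum>j\<in>J. of_int (k j) * (x j - y j))"
    and i: "(\<Sum>j\<in>J. of_int (k j) * (x j - y j)) \<in> \<int>"
    by (simp_all add: distrib_left)
  then show ?thesis
    unfolding chi_def by (simp only: iexp_add iexp_int[OF i]) simp
qed

lemma chi_add_arg: "chi J k (\<lambda>j. x j + a j) = chi J k x * chi J k a"
  unfolding chi_def by (simp add: distrib_left sum.distrib exp_add)

lemma chi_torus_add: "chi J k (torus_add J a x) = chi J k x * chi J k a"
proof -
  have "chi J k (torus_add J a x) = chi J k (\<lambda>j. x j + a j)"
    by (rule chi_int_shift) (simp add: torus_add_def frac_def)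
  then show ?thesis by (simp add: chi_add_arg)
qed

lemma chi_mult: "chi J k x * chi J l x = chi J (\<lambda>j. k j + l j) x"
  unfolding chi_def by (simp add: distrib_left sum.distrib exp_add[symmetric] algebra_simps)

lemma chi_zero: "chi J (\<lambda>_. 0) x = 1"
  by (simp add: chi_def)

lemma norm_chi[simp]: "norm (chi J k x) = 1"
  by (simp add: chi_def)

lemma chi_measurable[measurable]:
  assumes "finite J" shows "chi J k \<in> borel_measurable (torus_borel J)"
proof -
  have [measurable]: "(\<lambda>x. \<Sum>j\<in>J. of_int (k j) * x j) \<in> borel_measurable (PiM J (\<lambda>_. borel :: real measure))"
    by measurable
  show ?thesis unfolding chi_def torus_borel_def by measurable
qed

definition lam :: "'a set \<Rightarrow> ('a \<Rightarrow> real) \<Rightarrow> ('a \<Rightarrow> int) \<Rightarrow> real" where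
  "lam J freq k = (\<Sum>j\<in>J. of_int (k j) * freq j)"

definition line :: "('a \<Rightarrow> real) \<Rightarrow> real \<Rightarrow> 'a \<Rightarrow> real" where
  "line freq y = (\<lambda>j. freq j * y / (2 * pi))"

lemma chi_line: "chi J k (line freq y) = iexp (lam J freq k * y)"
proof -
  have "2 * pi * (\<Sum>j\<in>J. of_int (k j) * (freq j * y / (2 * pi))) = lam J freq k * y"
    by (simp add: lam_def sum_distrib_left sum_distrib_right mult.assoc)
  then show ?thesis by (simp add: chi_def line_def)
qed

lemma haar_facts:
  assumes "is_haar_prob J A \<mu>"
  shows "sets \<mu> = sets (torus_borel J)" "prob_space \<mu>" "A \<in> sets \<mu>" "emeasure \<mu> A = 1"
    "\<And>a. a \<in> A \<Longrightarrow> distr \<mu> (torus_borel J) (torus_add J a) = \<mu>"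
  using assms unfolding is_haar_prob_def by auto

lemma haar_integrable_bounded:
  assumes "is_haar_prob J A \<mu>" and [measurable]: "F \<in> borel_measurable (torus_borel J)"
    and b: "\<And>x. norm (F x) \<le> B"
  shows "integrable \<mu> (F :: _ \<Rightarrow> complex)"
proof -
  note hf = haar_facts[OF assms(1)]
  interpret prob_space \<mu> by (rule hf(2))
  have m: "F \<in> borel_measurable \<mu>" using meas_sets_eq[OF hf(1) assms(2)] .
  show ?thesis by (rule integrable_const_bound[where B=B]) (use b m in auto)
qed

lemma haar_chi:
  assumes h: "is_haar_prob J A \<mu>" and J: "finite J"
  shows "(\<integral>x. chi J k x \<partial>\<mu>) = (if \<forall>a\<in>A. chi J k a = 1 then 1 else 0)"
proof -
  note hf = haar_facts[OF h]
  interpret prob_space \<mu> by (rule hf(2))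
  have m: "chi J k \<in> borel_measurable \<mu>"
    using meas_sets_eq[OF hf(1) chi_measurable[OF J]] .
  have int: "integrable \<mu> (chi J k)"
    by (rule haar_integrable_bounded[OF h chi_measurable[OF J], where B=1]) simp
  let ?I = "\<integral>x. chi J k x \<partial>\<mu>"
  have shift: "?I = chi J k a * ?I" if a: "a \<in> A" for a
  proof -
    have "?I = (\<integral>x. chi J k x \<partial>(distr \<mu> (torus_borel J) (torus_add J a)))"
      using hf(5)[OF a] by simp
    also have "\<dots> = (\<integral>x. chi J k (torus_add J a x) \<partial>\<mu>)"
      by (rule integral_distr) (use meas_sets_eq[OF hf(1) torus_add_measurable] chi_measurable[OF J] in auto)
    also have "\<dots> = (\<integral>x. chi J k x * chi J k a \<partial>\<mu>)" by (simp add: chi_torus_add)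
    also have "\<dots> = chi J k a * ?I" by (simp add: mult.commute)
    finally show ?thesis .
  qed
  show ?thesis
  proof (cases "\<forall>a\<in>A. chi J k a = 1")
    case True
    have ae: "AE x in \<mu>. x \<in> A" using hf(3,4) prob_eq_1 by (simp add: emeasure_eq_measure)
    have "?I = (\<integral>x. 1 \<partial>\<mu>)"
      by (rule integral_cong_AE) (use ae True m in auto)
    then show ?thesis using True by (simp add: prob_space)
  next
    case False
    then obtain a where a: "a \<in> A" "chi J k a \<noteq> 1" by blast
    from shift[OF a(1)] have "(1 - chi J k a) * ?I = 0" by (simp add: algebra_simps)
    then show ?thesis using a False by simp
  qed
qed

section \<open>The orbit closure and characters\<close>

lemma iexp_diff_le: "cmod (iexp x - 1) \<le> \<bar>x\<bar>"
  using iexp_approx1[of x 0] by simp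

lemma frac_line_in_orbit:
  "(\<lambda>j\<in>J. frac (line freq y j)) \<in> orbit_closure J freq"
proof -
  have "dist_mod1 (frac (freq j * y / (2 * pi))) (freq j * y / (2 * pi)) = 0" for j
    by (simp add: dist_mod1_dm dm_zero_iff frac_def)
  then show ?thesis
    unfolding orbit_closure_def torus_pts_def line_def
    by (auto simp: frac_lt_1 intro!: exI[of _ y])
qed

lemma orbit_chi_iff:
  assumes J: "finite J"
  shows "(\<forall>a\<in>orbit_closure J freq. chi J k a = 1) \<longleftrightarrow> lam J freq k = 0"
proof
  assume all: "\<forall>a\<in>orbit_closure J freq. chi J k a = 1"
  show "lam J freq k = 0"
  proof (rule ccontr)
    assume ne: "lam J freq k \<noteq> 0"
    define y where "y = pi / lam J freq k"
    have "chi J k (\<lambda>j\<in>J. frac (line freq y j)) = chi J k (line freq y)"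
      by (rule chi_int_shift) (simp add: frac_def)
    also have "\<dots> = iexp pi" using ne by (simp add: chi_line y_def)
    also have "\<dots> = -1" by (simp add: cis_conv_exp[symmetric])
    finally show False using all frac_line_in_orbit[where J=J and freq=freq and y=y] by force
  qed
next
  assume l0: "lam J freq k = 0"
  show "\<forall>a\<in>orbit_closure J freq. chi J k a = 1"
  proof
    fix a assume a: "a \<in> orbit_closure J freq"
    define K where "K = (\<Sum>j\<in>J. \<bar>real_of_int (k j)\<bar>) + 1"
    have K: "K > 0" unfolding K_def by (simp add: add_nonneg_pos sum_nonneg)
    have bnd: "cmod (chi J k a - 1) \<le> e" if e: "e > 0" for e
    proof -
      obtain y where y: "\<And>j. j \<in> J \<Longrightarrow> dist_mod1 (a j) (freq j * y / (2 * pi)) < e / (2 * pi * K)"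
      proof -
        have "e / (2 * pi * K) > 0" using e K by simp
        then show ?thesis using a that unfolding orbit_closure_def by blast
      qed
      define r where "r j = (a j - line freq y j) - of_int (round (a j - line freq y j))" for j
      have rj: "\<bar>r j\<bar> < e / (2 * pi * K)" if "j \<in> J" for j
        using y[OF that] by (simp add: r_def dist_mod1_def line_def)
      have "chi J k a = chi J k (\<lambda>j. line freq y j + r j)"
        by (rule chi_int_shift) (simp add: r_def)
      also have "\<dots> = chi J k (line freq y) * chi J k r" by (rule chi_add_arg)
      also have "\<dots> = chi J k r" using l0 by (simp add: chi_line)
      finally have "cmod (chi J k a - 1) = cmod (iexp (2 * pi * (\<Sum>j\<in>J. of_int (k j) * r j)) - 1)"
        by (simp add: chi_def)
      also have "\<dots> \<le> \<bar>2 * pi * (\<Sum>j\<in>J. of_int (k j) * r j)\<bar>" by (rule iexp_diff_le)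
      also have "\<dots> \<le> 2 * pi * (\<Sum>j\<in>J. \<bar>of_int (k j)\<bar> * (e / (2 * pi * K)))"
      proof -
        have "\<bar>\<Sum>j\<in>J. of_int (k j) * r j\<bar> \<le> (\<Sum>j\<in>J. \<bar>of_int (k j) * r j\<bar>)" by (rule sum_abs)
        also have "\<dots> \<le> (\<Sum>j\<in>J. \<bar>of_int (k j)\<bar> * (e / (2 * pi * K)))"
        proof (rule sum_mono)
          fix j assume j: "j \<in> J"
          have "\<bar>of_int (k j)\<bar> * \<bar>r j\<bar> \<le> \<bar>of_int (k j)\<bar> * (e / (2 * pi * K))"
            using rj[OF j] by (intro mult_left_mono) auto
          then show "\<bar>of_int (k j) * r j\<bar> \<le> \<bar>of_int (k j)\<bar> * (e / (2 * pi * K))"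
            by (simp add: abs_mult)
        qed
        finally show ?thesis by (simp add: abs_mult)
      qed
      also have "\<dots> = e * (K - 1) / K"
      proof -
        have "(\<Sum>j\<in>J. \<bar>real_of_int (k j)\<bar> * (e / (2 * pi * K))) = (K - 1) * (e / (2 * pi * K))"
          by (subst sum_distrib_right[symmetric]) (simp add: K_def)
        then show ?thesis using K pi_gt_zero by (simp add: field_simps)
      qed
      also have "\<dots> \<le> e" using K e by (simp add: field_simps)
      finally show ?thesis .
    qed
    have "cmod (chi J k a - 1) \<le> 0"
    proof (rule field_le_epsilon)
      fix e :: real assume "0 < e" then show "cmod (chi J k a - 1) \<le> 0 + e" using bnd by simp
    qed
    then show "chi J k a = 1" by simp
  qed
qed




lemma avg_iexp:
  assumes e0: "0 < \<eta>0"
  shows "((\<lambda>Y. integral {\<eta>0..Y} (\<lambda>y. iexp (l * y)) / complex_of_real Y) \<longlongrightarrow> (if l = 0 then 1 else 0)) at_top"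
proof (cases "l = 0")
  case True
  have ev: "eventually (\<lambda>Y. complex_of_real (1 - \<eta>0 / Y) = integral {\<eta>0..Y} (\<lambda>y. iexp (l * y)) / complex_of_real Y) at_top"
    using eventually_ge_at_top[of \<eta>0]
  proof eventually_elim
    case (elim Y)
    then have "Y > 0" using e0 by linarith
    then show ?case using elim True by (simp add: field_simps scaleR_conv_of_real)
  qed
  have "((\<lambda>Y. 1 - \<eta>0 / Y) \<longlongrightarrow> 1) at_top" by real_asymp
  then have lim1: "((\<lambda>Y. complex_of_real (1 - \<eta>0 / Y)) \<longlongrightarrow> complex_of_real 1) at_top"
    by (rule tendsto_of_real)
  have "((\<lambda>Y. integral {\<eta>0..Y} (\<lambda>y. iexp (l * y)) / complex_of_real Y) \<longlongrightarrow> complex_of_real 1) at_top"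
    by (rule Lim_transform_eventually[OF lim1 ev])
  then show ?thesis using True by simp
next
  case False
  have ftc: "((\<lambda>y. iexp (l * y)) has_integral (iexp (l * Y) / (\<i> * l) - iexp (l * \<eta>0) / (\<i> * l))) {\<eta>0..Y}"
    if "\<eta>0 \<le> Y" for Y
  proof (rule fundamental_theorem_of_calculus[OF that])
    fix x assume "x \<in> {\<eta>0..Y}"
    define a where "a = \<i> * complex_of_real l"
    have a0: "a \<noteq> 0" using False by (simp add: a_def)
    have "((\<lambda>y. exp (a * complex_of_real y) / a) has_vector_derivative exp (a * complex_of_real x)) (at x)"
    proof (rule has_vector_derivative_real_field)
      show "((\<lambda>z. exp (a * z) / a) has_field_derivative exp (a * complex_of_real x)) (at (complex_of_real x))"
        using a0 by (auto intro!: derivative_eq_intros)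
    qed
    moreover have "\<And>y. exp (a * complex_of_real y) = iexp (l * y)" by (simp add: a_def mult.assoc)
    ultimately have "((\<lambda>y. iexp (l * y) / a) has_vector_derivative iexp (l * x)) (at x)" by simp
    then have "((\<lambda>y. iexp (l * y) / (\<i> * l)) has_vector_derivative iexp (l * x)) (at x)" by (simp add: a_def)
    then show "((\<lambda>y. iexp (l * y) / (\<i> * l)) has_vector_derivative iexp (l * x)) (at x within {\<eta>0..Y})"
      by (rule has_vector_derivative_at_within)
  qed
  have ev: "eventually (\<lambda>Y. norm (integral {\<eta>0..Y} (\<lambda>y. iexp (l * y)) / complex_of_real Y) \<le> 2 / (\<bar>l\<bar> * Y)) at_top"
    using eventually_ge_at_top[of \<eta>0]
  proof eventually_elim
    case (elim Y)
    then have Y: "Y > 0" using e0 by linarith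
    define D where "D = iexp (l * Y) - iexp (l * \<eta>0)"
    have I: "integral {\<eta>0..Y} (\<lambda>y. iexp (l * y)) = D / (\<i> * l)"
      using integral_unique[OF ftc[OF elim]] by (simp add: diff_divide_distrib D_def)
    have D2: "norm D \<le> 2"
      using norm_triangle_ineq4[of "iexp (l * Y)" "iexp (l * \<eta>0)"] by (simp add: D_def)
    have "norm (integral {\<eta>0..Y} (\<lambda>y. iexp (l * y)) / complex_of_real Y) = norm D / (\<bar>l\<bar> * Y)"
      using Y unfolding I by (simp add: norm_divide norm_mult)
    also have "\<dots> \<le> 2 / (\<bar>l\<bar> * Y)"
      using D2 Y False by (intro divide_right_mono) auto
    finally show ?case .
  qed
  have "((\<lambda>Y. (2 / \<bar>l\<bar>) * inverse Y) \<longlongrightarrow> (2 / \<bar>l\<bar>) * 0) at_top"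
    by (intro tendsto_mult tendsto_const tendsto_inverse_0_at_top filterlim_ident)
  then have "((\<lambda>Y. 2 / (\<bar>l\<bar> * Y)) \<longlongrightarrow> 0) at_top" by (simp add: field_simps)
  then have "((\<lambda>Y. integral {\<eta>0..Y} (\<lambda>y. iexp (l * y)) / complex_of_real Y) \<longlongrightarrow> 0) at_top"
    using Lim_null_comparison[OF ev] by blast
  then show ?thesis using False by simp
qed

section \<open>Trigonometric polynomials\<close>

inductive tp :: "'a set \<Rightarrow> (('a \<Rightarrow> real) \<Rightarrow> complex) \<Rightarrow> bool" for J where
  tp_chi: "tp J (chi J k)"
| tp_scale: "tp J F \<Longrightarrow> tp J (\<lambda>x. c * F x)"
| tp_add: "tp J F \<Longrightarrow> tp J G \<Longrightarrow> tp J (\<lambda>x. F x + G x)"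

lemma tp_const: "tp J (\<lambda>x. c)"
proof -
  have "tp J (\<lambda>x. c * chi J (\<lambda>_. 0) x)" by (intro tp_scale tp_chi)
  then show ?thesis by (simp add: chi_zero)
qed

lemma tp_mult_chi: "tp J F \<Longrightarrow> tp J (\<lambda>x. F x * chi J l x)"
proof (induction rule: tp.induct)
  case (tp_chi k)
  then show ?case by (simp add: chi_mult tp.tp_chi)
next
  case (tp_scale F c)
  then show ?case using tp.tp_scale[OF tp_scale.IH, of c] by (simp add: mult.assoc)
next
  case (tp_add F G)
  then show ?case using tp.tp_add[OF tp_add.IH] by (simp add: distrib_right)
qed

lemma tp_mult: "tp J G \<Longrightarrow> tp J F \<Longrightarrow> tp J (\<lambda>x. F x * G x)"
proof (induction rule: tp.induct)
  case (tp_chi k)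
  then show ?case by (rule tp_mult_chi)
next
  case (tp_scale G c)
  then show ?case using tp.tp_scale[OF tp_scale.IH[OF tp_scale.prems], of c] by (simp add: algebra_simps)
next
  case (tp_add G1 G2)
  then show ?case using tp.tp_add[OF tp_add.IH(1)[OF tp_add.prems] tp_add.IH(2)[OF tp_add.prems]]
    by (simp add: distrib_left)
qed

section \<open>Good functions: time averages converge to Haar integrals\<close>

definition good :: "'a set \<Rightarrow> ('a \<Rightarrow> real) \<Rightarrow> ('a \<Rightarrow> real) measure \<Rightarrow> real \<Rightarrow> (('a \<Rightarrow> real) \<Rightarrow> complex) \<Rightarrow> bool" where
  "good J freq \<mu> \<eta>0 F \<longleftrightarrow> integrable \<mu> F \<and> continuous_on UNIV (\<lambda>y. F (line freq y)) \<and>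
     ((\<lambda>Y. integral {\<eta>0..Y} (\<lambda>y. F (line freq y)) / complex_of_real Y) \<longlongrightarrow> (\<integral>x. F x \<partial>\<mu>)) at_top"

lemma tp_good:
  assumes h: "is_haar_prob J (orbit_closure J freq) \<mu>" and J: "finite J" and e0: "0 < \<eta>0"
  shows "tp J F \<Longrightarrow> good J freq \<mu> \<eta>0 F"
proof (induction rule: tp.induct)
  case (tp_chi k)
  have int: "integrable \<mu> (chi J k)"
    by (rule haar_integrable_bounded[OF h chi_measurable[OF J], where B=1]) simp
  have cont: "continuous_on UNIV (\<lambda>y. chi J k (line freq y))"
    by (simp add: chi_line continuous_intros)
  have lim: "((\<lambda>Y. integral {\<eta>0..Y} (\<lambda>y. chi J k (line freq y)) / complex_of_real Y) \<longlongrightarrow> (\<integral>x. chi J k x \<partial>\<mu>)) at_top"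
    using avg_iexp[OF e0, of "lam J freq k"]
    by (simp add: chi_line haar_chi[OF h J] orbit_chi_iff[OF J])
  show ?case using int cont lim by (simp add: good_def)
next
  case (tp_scale F c)
  then have i: "integrable \<mu> F" and c: "continuous_on UNIV (\<lambda>y. F (line freq y))"
    and l: "((\<lambda>Y. integral {\<eta>0..Y} (\<lambda>y. F (line freq y)) / complex_of_real Y) \<longlongrightarrow> (\<integral>x. F x \<partial>\<mu>)) at_top"
    by (auto simp: good_def)
  have "((\<lambda>Y. c * (integral {\<eta>0..Y} (\<lambda>y. F (line freq y)) / complex_of_real Y)) \<longlongrightarrow> c * (\<integral>x. F x \<partial>\<mu>)) at_top"
    by (rule tendsto_mult_left[OF l])
  then show ?case using i c
    by (simp add: good_def continuous_intros integral_mult_right)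
next
  case (tp_add F G)
  then have i: "integrable \<mu> F" "integrable \<mu> G"
    and c: "continuous_on UNIV (\<lambda>y. F (line freq y))" "continuous_on UNIV (\<lambda>y. G (line freq y))"
    and l: "((\<lambda>Y. integral {\<eta>0..Y} (\<lambda>y. F (line freq y)) / complex_of_real Y) \<longlongrightarrow> (\<integral>x. F x \<partial>\<mu>)) at_top"
           "((\<lambda>Y. integral {\<eta>0..Y} (\<lambda>y. G (line freq y)) / complex_of_real Y) \<longlongrightarrow> (\<integral>x. G x \<partial>\<mu>)) at_top"
    by (auto simp: good_def)
  have ion: "(\<lambda>y. F (line freq y)) integrable_on {\<eta>0..Y}" "(\<lambda>y. G (line freq y)) integrable_on {\<eta>0..Y}" for Y
    using c by (auto intro!: integrable_continuous_real continuous_on_subset[of UNIV])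
  have "((\<lambda>Y. integral {\<eta>0..Y} (\<lambda>y. F (line freq y)) / complex_of_real Y + integral {\<eta>0..Y} (\<lambda>y. G (line freq y)) / complex_of_real Y)
      \<longlongrightarrow> (\<integral>x. F x \<partial>\<mu>) + (\<integral>x. G x \<partial>\<mu>)) at_top"
    by (rule tendsto_add[OF l])
  then show ?case using i c
    by (simp add: good_def continuous_intros integral_add[OF ion] add_divide_distrib)
qed




lemma tp_sum: "finite S \<Longrightarrow> (\<And>i. i \<in> S \<Longrightarrow> tp J (F i)) \<Longrightarrow> tp J (\<lambda>x. \<Sum>i\<in>S. F i x)"
proof (induction S rule: finite_induct)
  case empty then show ?case by (simp add: tp_const)
next
  case (insert a S)
  then show ?case using tp_add[of J "F a" "\<lambda>x. \<Sum>i\<in>S. F i x"] by simp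
qed

lemma chi_delta:
  assumes J: "finite J" and j: "j \<in> J"
  shows "chi J (\<lambda>i. if i = j then c else 0) x = iexp (2 * pi * (of_int c * x j))"
proof -
  have "(\<Sum>i\<in>J. of_int (if i = j then c else 0) * x i) = (\<Sum>i\<in>J. if i = j then of_int c * x j else 0)"
    by (rule sum.cong) auto
  also have "\<dots> = of_int c * x j" using J j by simp
  finally show ?thesis by (simp add: chi_def)
qed

lemma tp_re_coord:
  assumes J: "finite J" and j: "j \<in> J"
  shows "tp J (\<lambda>x. complex_of_real (Re (C * exp (2 * pi * \<i> * complex_of_real (x j)))))"
proof -
  have e1: "exp (2 * pi * \<i> * complex_of_real (x j)) = chi J (\<lambda>i. if i = j then 1 else 0) x" for x
    using chi_delta[OF J j, of 1 x] by (simp add: mult_ac)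
  have e2: "cnj (exp (2 * pi * \<i> * complex_of_real (x j))) = chi J (\<lambda>i. if i = j then -1 else 0) x" for x
    using chi_delta[OF J j, of "-1" x] by (simp add: exp_cnj mult_ac)
  have eq: "complex_of_real (Re (C * exp (2 * pi * \<i> * complex_of_real (x j))))
      = (C / 2) * chi J (\<lambda>i. if i = j then 1 else 0) x + (cnj C / 2) * chi J (\<lambda>i. if i = j then -1 else 0) x" for x
  proof -
    let ?z = "C * exp (2 * pi * \<i> * complex_of_real (x j))"
    have "complex_of_real (Re ?z) = (?z + cnj ?z) / 2"
      by (subst complex_add_cnj) (simp only: of_real_mult, simp)
    also have "\<dots> = (C / 2) * chi J (\<lambda>i. if i = j then 1 else 0) x + (cnj C / 2) * chi J (\<lambda>i. if i = j then -1 else 0) x"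
      by (simp only: complex_cnj_mult e2 e1[symmetric]) (simp add: field_simps)
    finally show ?thesis .
  qed
  show ?thesis unfolding eq by (intro tp_add tp_scale tp_chi)
qed

lemma tp_rpf:
  assumes "real_polynomial_function q" and V: "tp J (\<lambda>x. complex_of_real (V x))"
  shows "tp J (\<lambda>x. complex_of_real (q (V x)))"
  using assms(1)
proof (induction rule: real_polynomial_function.induct)
  case (linear f)
  then obtain c where c: "f = (\<lambda>x. x * c)" using real_bounded_linear by blast
  show ?case using tp_scale[OF V, of "complex_of_real c"] by (simp add: c mult.commute)
next
  case (const c) then show ?case by (rule tp_const)
next
  case (add f g) then show ?case using tp_add by fastforce
next
  case (mult f g) then show ?case using tp_mult by fastforce
qed

lemma tp_poly:
  assumes "polynomial_function (g :: real \<Rightarrow> complex)" and V: "tp J (\<lambda>x. complex_of_real (V x))"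
  shows "tp J (\<lambda>x. g (V x))"
proof -
  have r: "real_polynomial_function (Re \<circ> g)" and i: "real_polynomial_function (Im \<circ> g)"
    using assms(1) unfolding polynomial_function_def by (auto intro: bounded_linear_Re bounded_linear_Im)
  have "tp J (\<lambda>x. complex_of_real ((Re \<circ> g) (V x)) + \<i> * complex_of_real ((Im \<circ> g) (V x)))"
    by (intro tp_add tp_scale tp_rpf[OF r V] tp_rpf[OF i V])
  moreover have "(\<lambda>x. complex_of_real ((Re \<circ> g) (V x)) + \<i> * complex_of_real ((Im \<circ> g) (V x))) = (\<lambda>x. g (V x))"
    by (auto simp: complex_eq_iff)
  ultimately show ?thesis by simp
qed

lemma main_limit:
  fixes h :: "real \<Rightarrow> complex" and V :: "('a \<Rightarrow> real) \<Rightarrow> real"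
  assumes hp: "is_haar_prob J (orbit_closure J freq) \<mu>" and J: "finite J" and e0: "0 < \<eta>0"
    and tpV: "tp J (\<lambda>x. complex_of_real (V x))" and Vb: "\<And>x. \<bar>V x\<bar> \<le> M"
    and Vm: "V \<in> borel_measurable (torus_borel J)"
    and Vc: "continuous_on UNIV (\<lambda>y. V (line freq y))"
    and hc: "continuous_on UNIV h"
  shows "((\<lambda>Y. integral {\<eta>0..Y} (\<lambda>y. h (V (line freq y))) / complex_of_real Y) \<longlongrightarrow> (\<integral>x. h (V x) \<partial>\<mu>)) at_top"
proof -
  note hf = haar_facts[OF hp]
  interpret prob_space \<mu> by (rule hf(2))
  define S where "S = {-M..M}"
  have VS: "V x \<in> S" for x using Vb[of x] by (auto simp: S_def abs_le_iff)
  have cS: "compact S" by (simp add: S_def)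
  obtain Bh where Bh: "\<And>u. u \<in> S \<Longrightarrow> norm (h u) \<le> Bh"
    using compact_imp_bounded[OF compact_continuous_image[OF continuous_on_subset[OF hc] cS]]
    unfolding bounded_iff by auto
  have hm: "h \<in> borel_measurable borel" using hc by (rule borel_measurable_continuous_onI)
  have Vm': "V \<in> borel_measurable \<mu>" using meas_sets_eq[OF hf(1) Vm] .
  have Hm: "(\<lambda>x. h (V x)) \<in> borel_measurable \<mu>" using measurable_compose[OF Vm' hm] by (simp add: o_def)
  have Hi: "integrable \<mu> (\<lambda>x. h (V x))"
    by (rule integrable_const_bound[where B=Bh]) (use Hm Bh VS in auto)
  have Hc: "continuous_on UNIV (\<lambda>y. h (V (line freq y)))"
    using continuous_on_compose2[OF hc Vc] by auto
  show ?thesis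
  unfolding tendsto_iff
  proof (intro allI impI)
    fix \<epsilon> :: real assume \<epsilon>: "\<epsilon> > 0"
    define \<delta> where "\<delta> = \<epsilon> / 4"
    have \<delta>: "\<delta> > 0" using \<epsilon> by (simp add: \<delta>_def)
    obtain g where gp: "polynomial_function g" and gh: "\<And>u. u \<in> S \<Longrightarrow> norm (h u - g u) < \<delta>"
      using Stone_Weierstrass_polynomial_function[OF cS continuous_on_subset[OF hc] \<delta>] by auto
    have G: "good J freq \<mu> \<eta>0 (\<lambda>x. g (V x))"
      by (rule tp_good[OF hp J e0 tp_poly[OF gp tpV]])
    then have Gi: "integrable \<mu> (\<lambda>x. g (V x))" and Gc: "continuous_on UNIV (\<lambda>y. g (V (line freq y)))"
      and Gl: "((\<lambda>Y. integral {\<eta>0..Y} (\<lambda>y. g (V (line freq y))) / complex_of_real Y) \<longlongrightarrow> (\<integral>x. g (V x) \<partial>\<mu>)) at_top"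
      by (auto simp: good_def)
    have ev1: "eventually (\<lambda>Y. dist (integral {\<eta>0..Y} (\<lambda>y. g (V (line freq y))) / complex_of_real Y) (\<integral>x. g (V x) \<partial>\<mu>) < \<delta>) at_top"
      using Gl \<delta> unfolding tendsto_iff by blast
    have intdiff: "norm ((\<integral>x. h (V x) \<partial>\<mu>) - (\<integral>x. g (V x) \<partial>\<mu>)) \<le> \<delta>"
    proof -
      have "(\<integral>x. h (V x) \<partial>\<mu>) - (\<integral>x. g (V x) \<partial>\<mu>) = (\<integral>x. h (V x) - g (V x) \<partial>\<mu>)"
        using Hi Gi by simp
      also have "norm \<dots> \<le> (\<integral>x. norm (h (V x) - g (V x)) \<partial>\<mu>)" by (rule integral_norm_bound)
      also have "\<dots> \<le> (\<integral>x. \<delta> \<partial>\<mu>)"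
        by (rule Bochner_Integration.integral_mono) (use Hi Gi gh VS in \<open>auto intro: less_imp_le\<close>)
      also have "\<dots> = \<delta>" by (simp add: prob_space)
      finally show ?thesis .
    qed
    show "eventually (\<lambda>Y. dist (integral {\<eta>0..Y} (\<lambda>y. h (V (line freq y))) / complex_of_real Y) (\<integral>x. h (V x) \<partial>\<mu>) < \<epsilon>) at_top"
      using ev1 eventually_gt_at_top[of \<eta>0]
    proof eventually_elim
      case (elim Y)
      have Y: "Y > 0" using elim e0 by linarith
      let ?IH = "integral {\<eta>0..Y} (\<lambda>y. h (V (line freq y)))"
      let ?IG = "integral {\<eta>0..Y} (\<lambda>y. g (V (line freq y)))"
      have ion: "(\<lambda>y. h (V (line freq y))) integrable_on {\<eta>0..Y}" "(\<lambda>y. g (V (line freq y))) integrable_on {\<eta>0..Y}"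
        using Hc Gc by (auto intro!: integrable_continuous_real continuous_on_subset[of UNIV])
      have "norm (?IH - ?IG) = norm (integral {\<eta>0..Y} (\<lambda>y. h (V (line freq y)) - g (V (line freq y))))"
        using integral_diff[OF ion] by simp
      also have "\<dots> \<le> \<delta> * (Y - \<eta>0)"
      proof (rule integral_bound)
        show "\<eta>0 \<le> Y" using elim by simp
        show "continuous_on {\<eta>0..Y} (\<lambda>y. h (V (line freq y)) - g (V (line freq y)))"
          by (intro continuous_intros continuous_on_subset[OF Hc] continuous_on_subset[OF Gc]) auto
        show "norm (h (V (line freq y)) - g (V (line freq y))) \<le> \<delta>" for y
          using gh[OF VS] by (simp add: less_imp_le)
      qed
      finally have "norm (?IH - ?IG) \<le> \<delta> * (Y - \<eta>0)" .
      then have "norm (?IH - ?IG) \<le> \<delta> * Y" using e0 \<delta> by (smt (verit) mult_left_mono)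
      moreover have "norm (?IH / complex_of_real Y - ?IG / complex_of_real Y) = norm (?IH - ?IG) / Y"
        using Y by (simp add: diff_divide_distrib[symmetric] norm_divide)
      ultimately have n1: "norm (?IH / complex_of_real Y - ?IG / complex_of_real Y) \<le> \<delta>"
        using Y by (simp add: divide_le_eq)
      define a where "a = ?IH / complex_of_real Y"
      define b where "b = ?IG / complex_of_real Y"
      define c where "c = (\<integral>x. g (V x) \<partial>\<mu>)"
      define d where "d = (\<integral>x. h (V x) \<partial>\<mu>)"
      have "a - d = (a - b) + (b - c) + (- (d - c))" by simp
      then have "norm (a - d) \<le> norm (a - b) + norm (b - c) + norm (d - c)"
        using norm_triangle_ineq[of "(a - b) + (b - c)" "- (d - c)"] norm_triangle_ineq[of "a - b" "b - c"]
        by (metis (no_types, lifting) add_right_mono norm_minus_cancel order_trans)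
      then have "dist (?IH / complex_of_real Y) (\<integral>x. h (V x) \<partial>\<mu>)
          \<le> norm (?IH / complex_of_real Y - ?IG / complex_of_real Y)
            + dist (?IG / complex_of_real Y) (\<integral>x. g (V x) \<partial>\<mu>)
            + norm ((\<integral>x. h (V x) \<partial>\<mu>) - (\<integral>x. g (V x) \<partial>\<mu>))"
        by (simp add: dist_norm a_def b_def c_def d_def)
      also have "\<dots> < \<delta> + \<delta> + \<delta>"
        using n1 elim(1) intdiff by linarith
      also have "\<dots> < \<epsilon>" using \<epsilon> by (simp add: \<delta>_def)
      finally show ?case .
    qed
  qed
qed




lemma frac_eq_if_diff_int: "x - y \<in> \<int> \<Longrightarrow> frac x = frac y"
proof -
  assume "x - y \<in> \<int>"
  then obtain k where k: "x = y + of_int k" by (metis Ints_cases add.commute diff_add_cancel)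
  show ?thesis unfolding k frac_def by simp
qed

definition zindep :: "('a \<Rightarrow> real) \<Rightarrow> 'a set \<Rightarrow> bool" where
  "zindep w S \<longleftrightarrow> (\<forall>c::'a \<Rightarrow> int. (\<Sum>b\<in>S. of_int (c b) * w b) = 0 \<longrightarrow> (\<forall>b\<in>S. c b = 0))"

lemma zindep_basis:
  assumes J: "finite J"
  obtains B where "B \<subseteq> J" "zindep w B"
    "\<And>j. j \<in> J \<Longrightarrow> \<exists>d r. d \<noteq> (0::int) \<and> of_int d * w j = (\<Sum>b\<in>B. of_int (r b) * w b)"
proof -
  let ?F = "{S. S \<subseteq> J \<and> zindep w S}"
  have finF: "finite ?F" using J by (auto intro: finite_subset[of _ "Pow J"])
  have em: "{} \<in> ?F" by (simp add: zindep_def)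
  define k where "k = Max (card ` ?F)"
  have "k \<in> card ` ?F" unfolding k_def using finF em by (intro Max_in) auto
  then obtain B where B: "B \<in> ?F" "card B = k" by auto
  have maxB: "card S \<le> card B" if "S \<in> ?F" for S using that finF B(2) k_def by (simp add: Max_ge)
  have finB: "finite B" using B J finite_subset by auto
  show thesis
  proof (rule that)
    show "B \<subseteq> J" "zindep w B" using B by auto
    fix j assume j: "j \<in> J"
    show "\<exists>d r. d \<noteq> (0::int) \<and> of_int d * w j = (\<Sum>b\<in>B. of_int (r b) * w b)"
    proof (cases "j \<in> B")
      case True
      have "(\<Sum>b\<in>B. of_int (if b = j then 1 else 0) * w b) = (\<Sum>b\<in>B. if b = j then w j else 0)"
        by (rule sum.cong) auto
      also have "\<dots> = w j" using True finB by simp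
      finally show ?thesis by (intro exI[of _ 1] exI[of _ "\<lambda>b. if b = j then 1 else 0"]) simp
    next
      case False
      have "insert j B \<notin> ?F"
      proof
        assume "insert j B \<in> ?F"
        then have "card (insert j B) \<le> card B" by (rule maxB)
        then show False using False finB by simp
      qed
      then have "\<not> zindep w (insert j B)" using j B by auto
      then obtain c where c0: "(\<Sum>b\<in>insert j B. of_int (c b) * w b) = 0" and cne: "\<exists>b\<in>insert j B. c b \<noteq> 0"
        unfolding zindep_def by auto
      have sumeq: "of_int (c j) * w j + (\<Sum>b\<in>B. of_int (c b) * w b) = 0" using c0 False finB by simp
      have "c j \<noteq> 0"
      proof
        assume cj: "c j = 0"
        then have "(\<Sum>b\<in>B. of_int (c b) * w b) = 0" using sumeq by simp
        then have "\<forall>b\<in>B. c b = 0" using B unfolding zindep_def by auto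
        then show False using cne cj by auto
      qed
      moreover have "of_int (- c j) * w j = (\<Sum>b\<in>B. of_int (c b) * w b)" using sumeq by simp
      ultimately show ?thesis by (intro exI[of _ "- c j"] exI[of _ c]) simp
    qed
  qed
qed

lemma zindep_repr:
  assumes J: "finite J"
  obtains B g n where "B \<subseteq> J" "zindep g B" "\<And>j. j \<in> J \<Longrightarrow> w j = (\<Sum>b\<in>B. of_int (n j b) * g b)"
proof -
  obtain B where B: "B \<subseteq> J" "zindep w B"
    and rep: "\<And>j. j \<in> J \<Longrightarrow> \<exists>d r. d \<noteq> (0::int) \<and> of_int d * w j = (\<Sum>b\<in>B. of_int (r b) * w b)"
    by (rule zindep_basis[OF J, where w=w]) blast
  have "\<forall>j\<in>J. \<exists>p. fst p \<noteq> (0::int) \<and> of_int (fst p) * w j = (\<Sum>b\<in>B. of_int (snd p b) * w b)"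
    using rep by fastforce
  then obtain p where p: "\<And>j. j \<in> J \<Longrightarrow> fst (p j) \<noteq> (0::int) \<and> of_int (fst (p j)) * w j = (\<Sum>b\<in>B. of_int (snd (p j) b) * w b)"
    by metis
  define d where "d j = fst (p j)" for j
  define r where "r j = snd (p j)" for j
  have dr: "d j \<noteq> 0" "of_int (d j) * w j = (\<Sum>b\<in>B. of_int (r j b) * w b)" if "j \<in> J" for j
    using p[OF that] by (auto simp: d_def r_def)
  define N where "N = (\<Prod>j\<in>J. d j)"
  have N0: "N \<noteq> 0" using dr J by (simp add: N_def)
  define g where "g b = w b / of_int N" for b
  define n where "n j b = (\<Prod>i\<in>J-{j}. d i) * r j b" for j b
  show thesis
  proof (rule that[of B g n])
    show "B \<subseteq> J" by fact
    show "zindep g B" unfolding zindep_def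
    proof (intro allI impI)
      fix c :: "'a \<Rightarrow> int" assume "(\<Sum>b\<in>B. of_int (c b) * g b) = 0"
      then have "(\<Sum>b\<in>B. of_int (c b) * w b) / of_int N = 0" by (simp add: g_def sum_divide_distrib)
      then have "(\<Sum>b\<in>B. of_int (c b) * w b) = 0" using N0 by simp
      then show "\<forall>b\<in>B. c b = 0" using B(2) unfolding zindep_def by blast
    qed
    fix j assume j: "j \<in> J"
    have "of_int N * w j = of_int (\<Prod>i\<in>J-{j}. d i) * (of_int (d j) * w j)"
      using J j by (simp add: N_def prod.remove mult_ac)
    also have "\<dots> = of_int (\<Prod>i\<in>J-{j}. d i) * (\<Sum>b\<in>B. of_int (r j b) * w b)" using dr(2)[OF j] by simp
    also have "\<dots> = (\<Sum>b\<in>B. of_int (n j b) * w b)" by (simp add: n_def sum_distrib_left sum_distrib_right mult_ac)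
    finally have eq: "of_int N * w j = (\<Sum>b\<in>B. of_int (n j b) * w b)" .
    have "(\<Sum>b\<in>B. of_int (n j b) * g b) = (\<Sum>b\<in>B. of_int (n j b) * w b) / of_int N"
      by (simp add: g_def sum_divide_distrib)
    also have "\<dots> = w j" using eq N0 by (simp add: field_simps)
    finally show "w j = (\<Sum>b\<in>B. of_int (n j b) * g b)" by simp
  qed
qed

lemma zindep_inj:
  assumes B: "finite B" and ind: "zindep g B"
  shows "inj_on g B"
proof (rule inj_onI)
  fix b b' assume b: "b \<in> B" "b' \<in> B" and eq: "g b = g b'"
  show "b = b'"
  proof (rule ccontr)
    assume ne: "b \<noteq> b'"
    define c where "c x = (if x = b then 1 else if x = b' then -1 else (0::int))" for x
    have "(\<Sum>x\<in>B. of_int (c x) * g x) = (\<Sum>x\<in>B. (if x = b then g x else 0) - (if x = b' then g x else 0))"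
      by (rule sum.cong) (auto simp: c_def ne)
    also have "\<dots> = g b - g b'" using B b by (simp add: sum_subtractf)
    also have "\<dots> = 0" using eq by simp
    finally have "\<forall>x\<in>B. c x = 0" using ind unfolding zindep_def by blast
    then have "c b = 0" using b by blast
    then show False by (simp add: c_def)
  qed
qed

lemma kron_B:
  assumes B: "finite B" and ind: "zindep g B" and \<epsilon>: "\<epsilon> > 0"
  shows "\<exists>y (h::'a \<Rightarrow> int). \<forall>b\<in>B. \<bar>y * g b - of_int (h b) - t b\<bar> < \<epsilon>"
proof -
  define n where "n = card B"
  obtain e where e: "bij_betw e {0..<n} B" using ex_bij_betw_nat_finite[OF B] unfolding n_def by blast
  define \<theta> where "\<theta> i = g (e i)" for i
  define \<alpha> where "\<alpha> i = t (e i)" for i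
  have eB: "e ` {..<n} = B" using e by (simp add: bij_betw_def atLeast0LessThan)
  have gi: "inj_on g B" by (rule zindep_inj[OF B ind])
  have inj: "inj_on \<theta> {..<n}"
  proof -
    have "inj_on e {..<n}" using e by (simp add: bij_betw_def atLeast0LessThan)
    moreover have "inj_on g (e ` {..<n})" using gi eB by simp
    ultimately have "inj_on (g \<circ> e) {..<n}" by (rule comp_inj_on)
    then show ?thesis by (simp add: \<theta>_def[abs_def] o_def)
  qed
  interpret Modules.module "(\<lambda>r. (*) (real_of_int r))"
    by (simp add: Modules.module.intro distrib_left mult.commute)
  have thB: "\<theta> ` {..<n} = g ` B" unfolding \<theta>_def using eB by auto
  have indep: "independent (\<theta> ` {..<n})"
    unfolding independent_explicit_module
  proof (intro allI impI)
    fix T u v assume T: "finite T" "T \<subseteq> \<theta> ` {..<n}" and s: "(\<Sum>v\<in>T. real_of_int (u v) * v) = 0" and v: "v \<in> T"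
    define c where "c x = (if g x \<in> T then u (g x) else 0)" for x
    define S where "S = {x\<in>B. g x \<in> T}"
    have gS: "g ` S = T" using T(2) thB by (auto simp: S_def)
    have iS: "inj_on g S" using gi by (rule inj_on_subset) (auto simp: S_def)
    have "(\<Sum>x\<in>B. of_int (c x) * g x) = (\<Sum>x\<in>B. if g x \<in> T then of_int (u (g x)) * g x else 0)"
      by (rule sum.cong) (auto simp: c_def)
    also have "\<dots> = (\<Sum>x\<in>S. of_int (u (g x)) * g x)"
      unfolding S_def using B by (simp add: sum.inter_filter)
    also have "\<dots> = (\<Sum>v\<in>T. real_of_int (u v) * v)"
      using sum.reindex[OF iS, of "\<lambda>v. real_of_int (u v) * v"] gS by simp
    also have "\<dots> = 0" by (rule s)
    finally have c0: "\<forall>x\<in>B. c x = 0" using ind unfolding zindep_def by blast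
    from v gS obtain x where x: "x \<in> S" "v = g x" by auto
    then show "u v = 0" using c0 by (auto simp: S_def c_def)
  qed
  obtain y h where yh: "\<And>i. i < n \<Longrightarrow> \<bar>y * \<theta> i - of_int (h i) - \<alpha> i\<bar> < \<epsilon>"
    using Kronecker_thm_1[where \<alpha>=\<alpha>, OF indep inj \<epsilon>] by blast
  show ?thesis
  proof (intro exI[of _ y] exI[of _ "\<lambda>b. h (inv_into {0..<n} e b)"] ballI)
    fix b assume b: "b \<in> B"
    define i where "i = inv_into {0..<n} e b"
    have bi: "b \<in> e ` {0..<n}" using b e by (simp add: bij_betw_def)
    have i: "i < n" using inv_into_into[OF bi] by (simp add: i_def)
    have ei: "e i = b" using f_inv_into_f[OF bi] by (simp add: i_def)
    show "\<bar>y * g b - of_int (h (inv_into {0..<n} e b)) - t b\<bar> < \<epsilon>"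
      using yh[OF i] by (simp add: \<theta>_def \<alpha>_def ei i_def[symmetric])
  qed
qed




lemma orbit_closure_eq:
  assumes J: "finite J"
  shows "orbit_closure J freq = {x \<in> space (torus_borel J). x \<in> torus_pts J \<and>
     (\<forall>n::nat. \<exists>q\<in>\<rat>. \<forall>j\<in>J. dm (x j - freq j * q / (2 * pi)) < 1 / Suc n)}"
proof (intro set_eqI iffI)
  fix x assume x: "x \<in> orbit_closure J freq"
  have xt: "x \<in> torus_pts J" using x by (simp add: orbit_closure_def)
  have xs: "x \<in> space (torus_borel J)" using xt by (auto simp: torus_pts_def torus_borel_def space_PiM PiE_def)
  have "\<exists>q\<in>\<rat>. \<forall>j\<in>J. dm (x j - freq j * q / (2 * pi)) < 1 / Suc n" for n :: nat
  proof -
    define e where "e = 1 / real (Suc n)"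
    have e: "e > 0" by (simp add: e_def)
    define K where "K = (\<Sum>j\<in>J. \<bar>freq j\<bar> / (2 * pi)) + 1"
    have K: "K > 0" unfolding K_def by (simp add: add_nonneg_pos sum_nonneg)
    obtain y where y: "\<And>j. j \<in> J \<Longrightarrow> dist_mod1 (x j) (freq j * y / (2 * pi)) < e / 2"
    proof -
      have "e / 2 > 0" using e by simp
      then show ?thesis using x that unfolding orbit_closure_def by blast
    qed
    obtain q where q: "q \<in> \<rat>" "y - e / (2 * K) < q" "q < y" 
      using Rats_dense_in_real[of "y - e / (2 * K)" y] e K by auto
    have "dm (x j - freq j * q / (2 * pi)) < e" if j: "j \<in> J" for j
    proof -
      have "dm (x j - freq j * q / (2 * pi)) \<le> dm (x j - freq j * y / (2 * pi)) + \<bar>(x j - freq j * q / (2 * pi)) - (x j - freq j * y / (2 * pi))\<bar>"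
        by (rule dm_lip)
      also have "\<bar>(x j - freq j * q / (2 * pi)) - (x j - freq j * y / (2 * pi))\<bar> = \<bar>freq j\<bar> / (2 * pi) * \<bar>y - q\<bar>"
      proof -
        have "(x j - freq j * q / (2 * pi)) - (x j - freq j * y / (2 * pi)) = freq j / (2 * pi) * (y - q)"
          by (simp add: field_simps)
        then show ?thesis by (simp add: abs_mult)
      qed
      also have "\<dots> \<le> K * (e / (2 * K))"
      proof (rule mult_mono)
        show "\<bar>freq j\<bar> / (2 * pi) \<le> K" unfolding K_def
          using member_le_sum[of j J "\<lambda>j. \<bar>freq j\<bar> / (2 * pi)"] j J by simp
        show "\<bar>y - q\<bar> \<le> e / (2 * K)" using q by simp
      qed (use K in auto)
      also have "\<dots> = e / 2" using K by simp
      finally show ?thesis using y[OF j] by (simp add: dist_mod1_dm)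
    qed
    then show ?thesis using q(1) unfolding e_def by blast
  qed
  then show "x \<in> {x \<in> space (torus_borel J). x \<in> torus_pts J \<and>
     (\<forall>n::nat. \<exists>q\<in>\<rat>. \<forall>j\<in>J. dm (x j - freq j * q / (2 * pi)) < 1 / Suc n)}" using xs xt by auto
next
  fix x assume x: "x \<in> {x \<in> space (torus_borel J). x \<in> torus_pts J \<and>
     (\<forall>n::nat. \<exists>q\<in>\<rat>. \<forall>j\<in>J. dm (x j - freq j * q / (2 * pi)) < 1 / Suc n)}"
  have "\<exists>y. \<forall>j\<in>J. dist_mod1 (x j) (freq j * y / (2 * pi)) < e" if e: "e > 0" for e
  proof -
    obtain n where n: "inverse (real (Suc n)) < e" using reals_Archimedean[OF e] by blast
    obtain q where "\<forall>j\<in>J. dm (x j - freq j * q / (2 * pi)) < 1 / Suc n" using x by blast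
    then show ?thesis using n by (auto simp: dist_mod1_dm inverse_eq_divide intro!: exI[of _ q])
  qed
  then show "x \<in> orbit_closure J freq" using x by (simp add: orbit_closure_def)
qed

lemma torus_pts_sets: "finite J \<Longrightarrow> torus_pts J \<in> sets (torus_borel J)"
  unfolding torus_pts_def torus_borel_def by (intro sets_PiM_I_finite) auto

lemma orbit_closure_sets:
  assumes J: "finite J"
  shows "orbit_closure J freq \<in> sets (torus_borel J)"
proof -
  have [measurable]: "(\<lambda>x. x j) \<in> borel_measurable (torus_borel J)" if "j \<in> J" for j
    unfolding torus_borel_def using that by measurable
  have [measurable]: "torus_pts J \<in> sets (torus_borel J)" by (rule torus_pts_sets[OF J])
  let ?M = "torus_borel J"
  have inner: "{x\<in>space ?M. \<forall>j\<in>J. dm (x j - freq j * q / (2 * pi)) < r} \<in> sets ?M" for q r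
  proof (cases "J = {}")
    case True then show ?thesis by simp
  next
    case False
    show ?thesis
    proof (rule sets.sets_Collect_finite_All'[OF _ J False])
      fix j assume j: "j \<in> J"
      show "{x \<in> space ?M. dm (x j - freq j * q / (2 * pi)) < r} \<in> sets ?M"
        using j by measurable
    qed
  qed
  have mid: "{x\<in>space ?M. \<exists>q\<in>\<rat>. \<forall>j\<in>J. dm (x j - freq j * q / (2 * pi)) < 1 / Suc n} \<in> sets ?M" for n :: nat
    by (rule sets.sets_Collect_countable_Ex'[OF inner countable_rat])
  have all: "{x\<in>space ?M. \<forall>n::nat. \<exists>q\<in>\<rat>. \<forall>j\<in>J. dm (x j - freq j * q / (2 * pi)) < 1 / Suc n} \<in> sets ?M"
    by (rule sets.sets_Collect_countable_All[OF mid])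
  have "orbit_closure J freq = torus_pts J \<inter> {x\<in>space ?M. \<forall>n::nat. \<exists>q\<in>\<rat>. \<forall>j\<in>J. dm (x j - freq j * q / (2 * pi)) < 1 / Suc n}"
    unfolding orbit_closure_eq[OF J] by auto
  then show ?thesis using all torus_pts_sets[OF J] by auto
qed

definition U :: "real measure" where "U = uniform_measure lborel {0..<1}"

lemma sets_U[simp, measurable_cong]: "sets U = sets borel" by (simp add: U_def)
lemma space_U[simp]: "space U = UNIV" by (simp add: U_def)

lemma prob_U: "prob_space U"
  unfolding U_def by (rule prob_space_uniform_measure) auto

lemma emeasure_U: "S \<in> sets borel \<Longrightarrow> emeasure U S = emeasure lborel (S \<inter> {0..<1})"
  unfolding U_def by (subst emeasure_uniform_measure) (auto simp: Int_commute divide_ennreal_def)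

lemma lborel_translate:
  fixes c :: real
  assumes S: "S \<in> sets borel"
  shows "emeasure lborel ((+) c -` S) = emeasure lborel S"
proof -
  have "emeasure lborel S = emeasure (distr lborel borel ((+) c)) S" by (simp add: lborel_distr_plus)
  also have "\<dots> = emeasure lborel ((+) c -` S \<inter> space lborel)"
    by (rule emeasure_distr) (use S in auto)
  finally show ?thesis by simp
qed

lemma U_shift: "distr U borel (\<lambda>t. frac (t + c)) = U"
proof (rule measure_eqI)
  show "sets (distr U borel (\<lambda>t. frac (t + c))) = sets U" by simp
next
  fix S assume "S \<in> sets (distr U borel (\<lambda>t. frac (t + c)))"
  then have S: "S \<in> sets borel" by simp
  define c' where "c' = frac c"
  have c': "0 \<le> c'" "c' < 1" by (auto simp: c'_def frac_lt_1)
  have fr: "frac (t + c) = frac (t + c')" for t by (rule frac_eq_if_diff_int) (simp add: c'_def frac_def)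
  define X1 where "X1 = (+) c' -` (S \<inter> {c'..<1})"
  define X2 where "X2 = (+) (c' - 1) -` (S \<inter> {0..<c'})"
  have X1m: "X1 \<in> sets borel"
    using measurable_sets[of "(+) c'" borel borel "S \<inter> {c'..<1}"] S unfolding X1_def by auto
  have X2m: "X2 \<in> sets borel"
    using measurable_sets[of "(+) (c' - 1)" borel borel "S \<inter> {0..<c'}"] S unfolding X2_def by auto
  have eq: "(\<lambda>t. frac (t + c)) -` S \<inter> {0..<1} = X1 \<union> X2"
  proof (intro set_eqI iffI)
    fix t assume t: "t \<in> (\<lambda>t. frac (t + c)) -` S \<inter> {0..<1}"
    show "t \<in> X1 \<union> X2"
    proof (cases "t + c' < 1")
      case True
      then have "frac (t + c') = t + c'" using t c' by (simp add: frac_eq)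
      then show ?thesis using t True fr by (auto simp: X1_def add.commute)
    next
      case False
      then have "frac (t + c') = t + c' - 1" using t c' by (subst frac_unique_iff) auto
      then show ?thesis using t False fr c' by (auto simp: X2_def add.commute add_diff_eq)
    qed
  next
    fix t assume "t \<in> X1 \<union> X2"
    then show "t \<in> (\<lambda>t. frac (t + c)) -` S \<inter> {0..<1}"
    proof
      assume "t \<in> X1"
      then have t: "c' + t \<in> S" "c' \<le> c' + t" "c' + t < 1" by (auto simp: X1_def)
      then have "frac (t + c') = t + c'" using c' by (simp add: frac_eq add.commute)
      then show ?thesis using t fr c' by (auto simp: add.commute)
    next
      assume "t \<in> X2"
      then have t: "c' - 1 + t \<in> S" "0 \<le> c' - 1 + t" "c' - 1 + t < c'" by (auto simp: X2_def)
      then have "frac (t + c') = c' - 1 + t" using c' by (subst frac_unique_iff) auto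
      then show ?thesis using t fr c' by auto
    qed
  qed
  have disj: "X1 \<inter> X2 = {}" by (auto simp: X1_def X2_def)
  have "emeasure (distr U borel (\<lambda>t. frac (t + c))) S = emeasure U ((\<lambda>t. frac (t + c)) -` S)"
    by (subst emeasure_distr) (use S in auto)
  also have "\<dots> = emeasure lborel ((\<lambda>t. frac (t + c)) -` S \<inter> {0..<1})"
  proof (rule emeasure_U)
    have fm: "(\<lambda>t. frac (t + c)) \<in> borel_measurable borel" by measurable
    show "(\<lambda>t. frac (t + c)) -` S \<in> sets borel"
      using measurable_sets[OF fm S] by simp
  qed
  also have "\<dots> = emeasure lborel X1 + emeasure lborel X2"
    unfolding eq by (rule plus_emeasure[symmetric]) (use X1m X2m disj in auto)
  also have "emeasure lborel X1 = emeasure lborel (S \<inter> {c'..<1})"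
    unfolding X1_def by (rule lborel_translate) (use S in auto)
  also have "emeasure lborel X2 = emeasure lborel (S \<inter> {0..<c'})"
    unfolding X2_def by (rule lborel_translate) (use S in auto)
  also have "emeasure lborel (S \<inter> {c'..<1}) + emeasure lborel (S \<inter> {0..<c'}) = emeasure lborel (S \<inter> {0..<1})"
  proof -
    have "S \<inter> {0..<1} = (S \<inter> {c'..<1}) \<union> (S \<inter> {0..<c'})" using c' by auto
    then show ?thesis by (simp add: plus_emeasure[symmetric] S) (subst plus_emeasure, use S in auto)
  qed
  also have "\<dots> = emeasure U S" by (rule emeasure_U[symmetric, OF S])
  finally show "emeasure (distr U borel (\<lambda>t. frac (t + c))) S = emeasure U S" .
qed




lemma P_shift:
  assumes B: "finite B"
  shows "distr (PiM B (\<lambda>_. U)) (PiM B (\<lambda>_. borel)) (\<lambda>t. \<lambda>b\<in>B. frac (t b + c b)) = PiM B (\<lambda>_. U)"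
proof -
  interpret PS: product_prob_space "\<lambda>_. U" by (intro product_prob_spaceI prob_U)
  have sB: "sets (PiM B (\<lambda>_. borel :: real measure)) = sets (PiM B (\<lambda>_. U))"
    by (rule sets_PiM_cong) auto
  have ms: "(\<lambda>t. \<lambda>b\<in>B. frac (t b + c b)) \<in> measurable (PiM B (\<lambda>_. U)) (PiM B (\<lambda>_. borel))"
    by measurable
  have mb: "(\<lambda>x. frac (x + c b)) \<in> borel_measurable borel" for b by measurable
  show ?thesis
  proof (rule PS.PiM_eqI[OF B])
    show "sets (distr (PiM B (\<lambda>_. U)) (PiM B (\<lambda>_. borel)) (\<lambda>t. \<lambda>b\<in>B. frac (t b + c b))) = sets (PiM B (\<lambda>_. U))"
      using sB by simp
  next
    fix A assume A: "\<And>i. i \<in> B \<Longrightarrow> A i \<in> sets U"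
    have A': "PiE B A \<in> sets (PiM B (\<lambda>_. borel))" using A B by (intro sets_PiM_I_finite) auto
    have pre: "(\<lambda>t. \<lambda>b\<in>B. frac (t b + c b)) -` PiE B A \<inter> space (PiM B (\<lambda>_. U))
        = PiE B (\<lambda>b. (\<lambda>x. frac (x + c b)) -` A b)"
      by (auto simp: space_PiM PiE_def Pi_def extensional_def)
    have preA: "(\<lambda>x. frac (x + c b)) -` A b \<in> sets U" if "b \<in> B" for b
      using measurable_sets[OF mb, of "A b"] A[OF that] by simp
    have "emeasure (distr (PiM B (\<lambda>_. U)) (PiM B (\<lambda>_. borel)) (\<lambda>t. \<lambda>b\<in>B. frac (t b + c b))) (PiE B A)
        = emeasure (PiM B (\<lambda>_. U)) (PiE B (\<lambda>b. (\<lambda>x. frac (x + c b)) -` A b))"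
      by (subst emeasure_distr[OF ms A']) (simp add: pre)
    also have "\<dots> = (\<Prod>b\<in>B. emeasure U ((\<lambda>x. frac (x + c b)) -` A b))"
      by (rule PS.emeasure_PiM[OF B preA])
    also have "\<dots> = (\<Prod>b\<in>B. emeasure U (A b))"
    proof (rule prod.cong[OF refl])
      fix b assume b: "b \<in> B"
      have "emeasure U (A b) = emeasure (distr U borel (\<lambda>x. frac (x + c b))) (A b)"
        by (simp add: U_shift)
      also have "\<dots> = emeasure U ((\<lambda>x. frac (x + c b)) -` A b \<inter> space U)"
        by (rule emeasure_distr) (use A[OF b] mb in auto)
      finally show "emeasure U ((\<lambda>x. frac (x + c b)) -` A b) = emeasure U (A b)" by simp
    qed
    finally show "emeasure (distr (PiM B (\<lambda>_. U)) (PiM B (\<lambda>_. borel)) (\<lambda>t. \<lambda>b\<in>B. frac (t b + c b))) (PiE B A)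
        = (\<Prod>b\<in>B. emeasure U (A b))" .
  qed
qed

section \<open>The image of the parametrisation is the orbit closure\<close>

lemma dm_sum_bound:
  assumes "finite B" and that: "\<And>b. b \<in> B \<Longrightarrow> \<bar>x b\<bar> \<le> (e::real)"
  shows "\<bar>\<Sum>b\<in>B. of_int (n b) * x b\<bar> \<le> (\<Sum>b\<in>B. \<bar>of_int (n b)\<bar>) * e"
proof -
  have "\<bar>\<Sum>b\<in>B. of_int (n b) * x b\<bar> \<le> (\<Sum>b\<in>B. \<bar>of_int (n b) * x b\<bar>)" by (rule sum_abs)
  also have "\<dots> \<le> (\<Sum>b\<in>B. \<bar>of_int (n b)\<bar> * e)"
    by (rule sum_mono) (use that in \<open>auto simp: abs_mult intro: mult_left_mono\<close>)
  also have "\<dots> = (\<Sum>b\<in>B. \<bar>of_int (n b)\<bar>) * e" by (simp add: sum_distrib_right)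
  finally show ?thesis .
qed

lemma phi_in_orbit:
  assumes J: "finite J" and BJ: "B \<subseteq> J" and ind: "zindep g B"
    and repr: "\<And>j. j \<in> J \<Longrightarrow> freq j / (2 * pi) = (\<Sum>b\<in>B. of_int (n j b) * g b)"
  shows "(\<lambda>j\<in>J. frac (\<Sum>b\<in>B. of_int (n j b) * t b)) \<in> orbit_closure J freq"
proof -
  have B: "finite B" using J BJ finite_subset by auto
  have pts: "(\<lambda>j\<in>J. frac (\<Sum>b\<in>B. of_int (n j b) * t b)) \<in> torus_pts J"
    by (auto simp: torus_pts_def frac_lt_1)
  have "\<exists>y. \<forall>j\<in>J. dist_mod1 ((\<lambda>j\<in>J. frac (\<Sum>b\<in>B. of_int (n j b) * t b)) j) (freq j * y / (2 * pi)) < e"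
    if e: "e > 0" for e
  proof -
    define K where "K = (\<Sum>j\<in>J. \<Sum>b\<in>B. \<bar>real_of_int (n j b)\<bar>) + 1"
    have K: "K > 0" unfolding K_def by (simp add: add_nonneg_pos sum_nonneg)
    obtain y and h :: "'a \<Rightarrow> int" where yh: "\<And>b. b \<in> B \<Longrightarrow> \<bar>y * g b - of_int (h b) - t b\<bar> < e / K"
      using kron_B[OF B ind, of "e / K" t] e K by auto
    show ?thesis
    proof (intro exI[of _ y] ballI)
      fix j assume j: "j \<in> J"
      define S where "S = (\<Sum>b\<in>B. of_int (n j b) * t b)"
      define X where "X = (\<Sum>b\<in>B. of_int (n j b) * (y * g b - of_int (h b) - t b))"
      have fy: "freq j * y / (2 * pi) = (\<Sum>b\<in>B. of_int (n j b) * (y * g b))"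
        using repr[OF j] by (simp add: sum_distrib_left sum_distrib_right mult_ac field_simps)
      have X_eq: "X = (\<Sum>b\<in>B. of_int (n j b) * (y * g b)) - (\<Sum>b\<in>B. of_int (n j b) * of_int (h b)) - S"
        unfolding X_def S_def by (simp add: sum_subtractf[symmetric] right_diff_distrib)
      have oi: "real_of_int (\<lfloor>S\<rfloor> + (\<Sum>b\<in>B. n j b * h b)) = of_int \<lfloor>S\<rfloor> + (\<Sum>b\<in>B. of_int (n j b) * of_int (h b))"
        by simp
      have "frac S - freq j * y / (2 * pi) = - X - of_int (\<lfloor>S\<rfloor> + (\<Sum>b\<in>B. n j b * h b))"
        using X_eq fy oi unfolding frac_def by linarith
      then have "dm (frac S - freq j * y / (2 * pi)) = dm (- X)"
        by (simp only: dm_shift')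
      also have "\<dots> \<le> \<bar>X\<bar>" using dm_le_abs[of "-X"] by simp
      also have "\<dots> \<le> (\<Sum>b\<in>B. \<bar>of_int (n j b)\<bar>) * (e / K)"
        unfolding X_def by (rule dm_sum_bound[OF B]) (use yh in \<open>auto intro: less_imp_le\<close>)
      also have "\<dots> \<le> (K - 1) * (e / K)"
      proof (rule mult_right_mono)
        show "(\<Sum>b\<in>B. \<bar>real_of_int (n j b)\<bar>) \<le> K - 1"
          unfolding K_def using member_le_sum[of j J "\<lambda>j. \<Sum>b\<in>B. \<bar>real_of_int (n j b)\<bar>"] j J
          by (simp add: sum_nonneg)
      qed (use e K in auto)
      also have "\<dots> < e" using e K by (simp add: field_simps)
      finally show "dist_mod1 ((\<lambda>j\<in>J. frac (\<Sum>b\<in>B. of_int (n j b) * t b)) j) (freq j * y / (2 * pi)) < e"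
        using j by (simp add: dist_mod1_dm S_def)
    qed
  qed
  then show ?thesis using pts by (simp add: orbit_closure_def)
qed




lemma orbit_in_image:
  assumes J: "finite J" and BJ: "B \<subseteq> J"
    and repr: "\<And>j. j \<in> J \<Longrightarrow> freq j / (2 * pi) = (\<Sum>b\<in>B. of_int (n j b) * g b)"
    and a: "a \<in> orbit_closure J freq"
  shows "\<exists>l. a = (\<lambda>j\<in>J. frac (\<Sum>b\<in>B. of_int (n j b) * l b))"
proof -
  have B: "finite B" using J BJ finite_subset by auto
  have "\<forall>k::nat. \<exists>y. \<forall>j\<in>J. dm (a j - freq j * y / (2 * pi)) < 1 / Suc k"
  proof
    fix k :: nat
    have "1 / real (Suc k) > 0" by simp
    then show "\<exists>y. \<forall>j\<in>J. dm (a j - freq j * y / (2 * pi)) < 1 / Suc k"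
      using a unfolding orbit_closure_def dist_mod1_dm by blast
  qed
  then obtain ys where ys: "\<And>k j. j \<in> J \<Longrightarrow> dm (a j - freq j * ys k / (2 * pi)) < 1 / Suc k"
    by metis
  define t where "t k = (\<lambda>b. frac (g b * ys k))" for k
  have "\<forall>\<delta>\<subseteq>B. \<exists>l::'a \<Rightarrow> real. \<exists>r::nat\<Rightarrow>nat. strict_mono r \<and>
      (\<forall>e>0. eventually (\<lambda>k. \<forall>i\<in>\<delta>. dist (t (r k) i) (l i) < e) sequentially)"
  proof (rule compact_lemma_general[where proj = "\<lambda>x i. x i" and unproj = "\<lambda>x. x"])
    show "finite B" by (rule B)
    fix i
    show "bounded ((\<lambda>x. x i) ` range t)"
      unfolding bounded_iff by (rule exI[of _ 1]) (auto simp: t_def frac_lt_1 less_imp_le)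
  qed auto
  then obtain l r where r: "strict_mono r"
    and conv: "\<And>e. e > 0 \<Longrightarrow> eventually (\<lambda>k. \<forall>i\<in>B. dist (t (r k) i) (l i) < e) sequentially"
    by blast
  have dm0: "dm (a j - (\<Sum>b\<in>B. of_int (n j b) * l b)) = 0" if j: "j \<in> J" for j
  proof -
    have bnd: "dm (a j - (\<Sum>b\<in>B. of_int (n j b) * l b)) \<le> e" if e: "e > 0" for e
    proof -
      define K where "K = (\<Sum>b\<in>B. \<bar>real_of_int (n j b)\<bar>) + 1"
      have K: "K > 0" unfolding K_def by (simp add: add_nonneg_pos sum_nonneg)
      obtain N1 where N1: "\<And>k. k \<ge> N1 \<Longrightarrow> \<forall>i\<in>B. dist (t (r k) i) (l i) < e / (2 * K)"
        using conv[of "e / (2 * K)"] e K by (auto simp: eventually_sequentially)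
      obtain N2 where N2: "inverse (real (Suc N2)) < e / 2" using reals_Archimedean[of "e / 2"] e by auto
      define k where "k = max N1 N2"
      have rk: "k \<le> r k" by (rule seq_suble[OF r])
      define y where "y = ys (r k)"
      define F where "F = freq j * y / (2 * pi)"
      define St where "St = (\<Sum>b\<in>B. of_int (n j b) * t (r k) b)"
      define Sl where "Sl = (\<Sum>b\<in>B. of_int (n j b) * l b)"
      have d1: "dm (a j - F) < e / 2"
      proof -
        have "dm (a j - F) < 1 / Suc (r k)" using ys[OF j, of "r k"] by (simp add: F_def y_def)
        also have "\<dots> \<le> inverse (real (Suc N2))" using rk by (simp add: k_def inverse_eq_divide frac_le)
        finally show ?thesis using N2 by linarith
      qed
      have fy: "F = (\<Sum>b\<in>B. of_int (n j b) * (g b * y))"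
        using repr[OF j] by (simp add: F_def sum_distrib_left sum_distrib_right mult_ac field_simps)
      have d2: "F - St = (\<Sum>b\<in>B. of_int (n j b * \<lfloor>g b * y\<rfloor>))"
        unfolding fy St_def t_def y_def frac_def by (simp add: sum_subtractf[symmetric] right_diff_distrib)
      have d3: "\<bar>St - Sl\<bar> \<le> (\<Sum>b\<in>B. \<bar>of_int (n j b)\<bar>) * (e / (2 * K))"
      proof -
        have "St - Sl = (\<Sum>b\<in>B. of_int (n j b) * (t (r k) b - l b))"
          unfolding St_def Sl_def by (simp add: sum_subtractf[symmetric] right_diff_distrib)
        also have "\<bar>\<dots>\<bar> \<le> (\<Sum>b\<in>B. \<bar>of_int (n j b)\<bar>) * (e / (2 * K))"
          by (rule dm_sum_bound[OF B]) (use N1[of k] in \<open>auto simp: k_def dist_real_def intro: less_imp_le\<close>)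
        finally show ?thesis .
      qed
      have d4: "(\<Sum>b\<in>B. \<bar>real_of_int (n j b)\<bar>) * (e / (2 * K)) \<le> e / 2"
      proof -
        have "(\<Sum>b\<in>B. \<bar>real_of_int (n j b)\<bar>) * (e / (2 * K)) \<le> K * (e / (2 * K))"
          using e K by (intro mult_right_mono) (auto simp: K_def)
        also have "\<dots> = e / 2" using K by simp
        finally show ?thesis .
      qed
      have "a j - Sl = ((a j - F) + (St - Sl)) + of_int (\<Sum>b\<in>B. n j b * \<lfloor>g b * y\<rfloor>)"
        using d2 by simp
      then have "dm (a j - Sl) = dm ((a j - F) + (St - Sl))" by (simp only: dm_shift)
      also have "\<dots> \<le> dm (a j - F) + dm (St - Sl)" by (rule dm_triangle)
      also have "\<dots> \<le> e / 2 + e / 2" using d1 d3 d4 dm_le_abs[of "St - Sl"] by linarith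
      finally show ?thesis by (simp add: Sl_def)
    qed
    have "dm (a j - (\<Sum>b\<in>B. of_int (n j b) * l b)) \<le> 0"
    proof (rule field_le_epsilon)
      fix e :: real assume "0 < e" then show "dm (a j - (\<Sum>b\<in>B. of_int (n j b) * l b)) \<le> 0 + e" using bnd by simp
    qed
    then show ?thesis using dm_nonneg by (simp add: order_antisym)
  qed
  have at: "a \<in> torus_pts J" using a by (simp add: orbit_closure_def)
  show ?thesis
  proof (intro exI[of _ l] ext)
    fix j
    show "a j = (\<lambda>j\<in>J. frac (\<Sum>b\<in>B. of_int (n j b) * l b)) j"
    proof (cases "j \<in> J")
      case False then show ?thesis using at by (auto simp: torus_pts_def PiE_def extensional_def)
    next
      case True
      have a01: "0 \<le> a j" "a j < 1" using at True by (auto simp: torus_pts_def PiE_def Pi_def)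
      have "a j - (\<Sum>b\<in>B. of_int (n j b) * l b) \<in> \<int>" using dm0[OF True] by (simp add: dm_zero_iff)
      then have "frac (a j) = frac (\<Sum>b\<in>B. of_int (n j b) * l b)" by (rule frac_eq_if_diff_int)
      then show ?thesis using True a01 by (simp add: frac_eq)
    qed
  qed
qed

lemma haar_exists:
  assumes J: "finite J"
  shows "\<exists>\<mu>. is_haar_prob J (orbit_closure J freq) \<mu>"
proof -
  obtain B g n where BJ: "B \<subseteq> J" and ind: "zindep g B"
    and repr: "\<And>j. j \<in> J \<Longrightarrow> freq j / (2 * pi) = (\<Sum>b\<in>B. of_int (n j b) * g b)"
    by (rule zindep_repr[OF J, where w = "\<lambda>j. freq j / (2 * pi)"]) blast
  have B: "finite B" using J BJ finite_subset by auto
  define \<phi> where "\<phi> t = (\<lambda>j\<in>J. frac (\<Sum>b\<in>B. of_int (n j b) * t b))" for t :: "'a \<Rightarrow> real"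
  define P where "P = PiM B (\<lambda>_. U)"
  define \<mu> where "\<mu> = distr P (torus_borel J) \<phi>"
  let ?A = "orbit_closure J freq"
  have Pprob: "prob_space P" unfolding P_def by (rule prob_space_PiM) (rule prob_U)
  have \<phi>m: "\<phi> \<in> measurable P (torus_borel J)" unfolding \<phi>_def P_def torus_borel_def by measurable
  have \<phi>m': "\<phi> \<in> measurable (PiM B (\<lambda>_. borel)) (torus_borel J)" unfolding \<phi>_def torus_borel_def by measurable
  have \<phi>A: "\<phi> t \<in> ?A" for t unfolding \<phi>_def by (rule phi_in_orbit[OF J BJ ind repr])
  have Am: "?A \<in> sets (torus_borel J)" by (rule orbit_closure_sets[OF J])
  show ?thesis
  proof (intro exI[of _ \<mu>], unfold is_haar_prob_def, intro conjI ballI)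
    show "sets \<mu> = sets (torus_borel J)" by (simp add: \<mu>_def)
    show "prob_space \<mu>" unfolding \<mu>_def by (rule prob_space.prob_space_distr[OF Pprob \<phi>m])
    show "?A \<in> sets \<mu>" using Am by (simp add: \<mu>_def)
    show "emeasure \<mu> ?A = 1"
    proof -
      have "emeasure \<mu> ?A = emeasure P (\<phi> -` ?A \<inter> space P)" unfolding \<mu>_def by (rule emeasure_distr[OF \<phi>m Am])
      also have "\<phi> -` ?A \<inter> space P = space P" using \<phi>A by auto
      also have "emeasure P (space P) = 1" by (rule prob_space.emeasure_space_1[OF Pprob])
      finally show ?thesis .
    qed
  next
    fix a assume a: "a \<in> ?A"
    obtain l where l: "a = \<phi> l" using orbit_in_image[OF J BJ repr a] unfolding \<phi>_def by blast
    define \<sigma> where "\<sigma> t = (\<lambda>b\<in>B. frac (t b + l b))" for t :: "'a \<Rightarrow> real"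
    have \<sigma>m: "\<sigma> \<in> measurable P (PiM B (\<lambda>_. borel))" unfolding \<sigma>_def P_def by measurable
    have addm: "torus_add J a \<in> measurable (torus_borel J) (torus_borel J)" by (rule torus_add_measurable)
    have pt: "torus_add J a (\<phi> t) = \<phi> (\<sigma> t)" for t
    proof (rule ext)
      fix j show "torus_add J a (\<phi> t) j = \<phi> (\<sigma> t) j"
      proof (cases "j \<in> J")
        case False then show ?thesis by (simp add: torus_add_def \<phi>_def)
      next
        case True
        define St where "St = (\<Sum>b\<in>B. of_int (n j b) * t b)"
        define Sl where "Sl = (\<Sum>b\<in>B. of_int (n j b) * l b)"
        have e1: "torus_add J a (\<phi> t) j = frac (frac St + frac Sl)"
          using True by (simp add: torus_add_def \<phi>_def l St_def Sl_def)
        have e2: "\<phi> (\<sigma> t) j = frac (\<Sum>b\<in>B. of_int (n j b) * frac (t b + l b))"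
          using True by (simp add: \<phi>_def \<sigma>_def)
        have "(\<Sum>b\<in>B. of_int (n j b) * frac (t b + l b)) = St + Sl - (\<Sum>b\<in>B. of_int (n j b * \<lfloor>t b + l b\<rfloor>))"
          unfolding St_def Sl_def frac_def
          by (simp add: sum_subtractf[symmetric] sum.distrib[symmetric] algebra_simps)
        then have "frac St + frac Sl - (\<Sum>b\<in>B. of_int (n j b) * frac (t b + l b))
            = of_int ((\<Sum>b\<in>B. n j b * \<lfloor>t b + l b\<rfloor>) - \<lfloor>St\<rfloor> - \<lfloor>Sl\<rfloor>)"
          unfolding frac_def by simp
        then have "frac (frac St + frac Sl) = frac (\<Sum>b\<in>B. of_int (n j b) * frac (t b + l b))"
          by (intro frac_eq_if_diff_int) (metis Ints_of_int)
        then show ?thesis using e1 e2 by simp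
      qed
    qed
    have "distr \<mu> (torus_borel J) (torus_add J a) = distr P (torus_borel J) (torus_add J a \<circ> \<phi>)"
      unfolding \<mu>_def by (rule distr_distr[OF addm \<phi>m])
    also have "\<dots> = distr P (torus_borel J) (\<phi> \<circ> \<sigma>)" by (rule distr_cong) (auto simp: pt)
    also have "\<dots> = distr (distr P (PiM B (\<lambda>_. borel)) \<sigma>) (torus_borel J) \<phi>"
      by (rule distr_distr[symmetric, OF \<phi>m' \<sigma>m])
    also have "distr P (PiM B (\<lambda>_. borel)) \<sigma> = P" unfolding P_def \<sigma>_def by (rule P_shift[OF B])
    finally show "distr \<mu> (torus_borel J) (torus_add J a) = \<mu>" by (simp add: \<mu>_def)
  qed
qed





lemma tp_re_coord':
  assumes J: "finite J" and j: "j \<in> J"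
  shows "tp J (\<lambda>x. complex_of_real (Re (a * exp (2 * pi * \<i> * complex_of_real (x j)) * c)))"
  using tp_re_coord[OF J j, of "a * c"] by (simp add: mult_ac)

lemma E_T_line: "E_T m f \<psi> \<eta> T y = w_T m f \<psi> \<eta> T (line fst y)"
proof -
  have "exp (2 * pi * \<i> * complex_of_real (line fst y j)) = exp (\<i> * complex_of_real (fst j * y))" for j :: "real \<times> int"
    by (simp add: line_def field_simps)
  then show ?thesis
    unfolding E_T_def w_T_def by (simp add: case_prod_unfold)
qed

theorem lemma4p1:
  fixes m :: "real \<Rightarrow> int \<Rightarrow> nat"
    and f \<psi> :: "real \<Rightarrow> real"
    and h :: "real \<Rightarrow> complex"
    and \<eta> \<eta>0 T :: real
  assumes fin: "finite (spec_set m T)"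
    and f_smooth: "\<forall>k x. ((deriv ^^ k) f) differentiable (at x)"
    and f_per: "\<forall>x. f (x + 2 * pi) = f x"
    and f_mean: "fhat f 0 = 0"
    and psi_smooth: "\<forall>k x. ((deriv ^^ k) \<psi>) differentiable (at x)"
    and psi_even: "\<forall>t. \<psi> (- t) = \<psi> t"
    and psi_nonneg: "\<forall>t. 0 \<le> \<psi> t"
    and psi_supp: "\<forall>t. 1 < \<bar>t\<bar> \<longrightarrow> \<psi> t = 0"
    and psi_int: "(\<psi> has_integral 1) UNIV"
    and eta: "0 < \<eta>" "\<eta> \<le> \<eta>0"
    and T: "0 < T"
    and h: "continuous_on UNIV h"
  shows "((\<lambda>Y. integral {\<eta>0..Y} (\<lambda>y. h (E_T m f \<psi> \<eta> T y)) / complex_of_real Y)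
            \<longlongrightarrow> (LINT a|haar_prob (spec_set m T) (orbit_closure (spec_set m T) fst).
                      h (w_T m f \<psi> \<eta> T a))) at_top
       \<and> (LINT a|haar_prob (spec_set m T) (orbit_closure (spec_set m T) fst).
              h (w_T m f \<psi> \<eta> T a))
         = (LINT x|distr (haar_prob (spec_set m T) (orbit_closure (spec_set m T) fst)) borel
                         (w_T m f \<psi> \<eta> T). h x)"
proof -
  define J where "J = spec_set m T"
  define V where "V = w_T m f \<psi> \<eta> T"
  define b where "b = b_const m f \<psi> \<eta>"
  define C where "C j = real (m (fst j) (snd j))" for j :: "real \<times> int"
  define a where "a j = fhat f (- snd j)" for j :: "real \<times> int"
  define c where "c j = c_se \<psi> \<eta> (fst j)" for j :: "real \<times> int"
  have J: "finite J" using fin by (simp add: J_def)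
  have e0: "0 < \<eta>0" using eta by linarith
  obtain \<mu> where hp: "is_haar_prob J (orbit_closure J fst) \<mu>" using haar_exists[OF J] by blast
  have hpe: "haar_prob J (orbit_closure J fst) = \<mu>" by (rule haar_prob_eq[OF hp])
  note hf = haar_facts[OF hp]
  have Vdef: "V x = 2 * (\<Sum>j\<in>J. C j * Re (a j * exp (2 * pi * \<i> * complex_of_real (x j)) * c j)) + b" for x
    by (simp add: V_def w_T_def J_def C_def a_def c_def b_def)
  have tpV: "tp J (\<lambda>x. complex_of_real (V x))"
  proof -
    have "tp J (\<lambda>x. 2 * (\<Sum>j\<in>J. complex_of_real (C j) * complex_of_real (Re (a j * exp (2 * pi * \<i> * complex_of_real (x j)) * c j))) + complex_of_real b)"
      by (intro tp_add tp_scale tp_sum[OF J] tp_re_coord'[OF J] tp_const)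
    then show ?thesis by (simp add: Vdef)
  qed
  define M where "M = 2 * (\<Sum>j\<in>J. C j * (norm (a j) * norm (c j))) + \<bar>b\<bar>"
  have Vb: "\<bar>V x\<bar> \<le> M" for x
  proof -
    have "\<bar>\<Sum>j\<in>J. C j * Re (a j * exp (2 * pi * \<i> * complex_of_real (x j)) * c j)\<bar>
        \<le> (\<Sum>j\<in>J. \<bar>C j * Re (a j * exp (2 * pi * \<i> * complex_of_real (x j)) * c j)\<bar>)" by (rule sum_abs)
    also have "\<dots> \<le> (\<Sum>j\<in>J. C j * (norm (a j) * norm (c j)))"
    proof (rule sum_mono)
      fix j
      have "\<bar>Re (a j * exp (2 * pi * \<i> * complex_of_real (x j)) * c j)\<bar> \<le> norm (a j * exp (2 * pi * \<i> * complex_of_real (x j)) * c j)"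
        by (rule abs_Re_le_cmod)
      also have "\<dots> = norm (a j) * norm (c j)" by (simp add: norm_mult)
      finally show "\<bar>C j * Re (a j * exp (2 * pi * \<i> * complex_of_real (x j)) * c j)\<bar> \<le> C j * (norm (a j) * norm (c j))"
        by (simp add: abs_mult C_def mult_left_mono)
    qed
    finally show ?thesis unfolding Vdef M_def by linarith
  qed
  have Vm: "V \<in> borel_measurable (torus_borel J)"
  proof -
    have [measurable]: "(\<lambda>x. x j) \<in> borel_measurable (torus_borel J)" if "j \<in> J" for j
      unfolding torus_borel_def using that by measurable
    show ?thesis unfolding Vdef[abs_def] by measurable
  qed
  have Vc: "continuous_on UNIV (\<lambda>y. V (line fst y))"
    unfolding Vdef line_def by (intro continuous_intros) auto
  have lim: "((\<lambda>Y. integral {\<eta>0..Y} (\<lambda>y. h (V (line fst y))) / complex_of_real Y) \<longlongrightarrow> (\<integral>x. h (V x) \<partial>\<mu>)) at_top"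
    by (rule main_limit[OF hp J e0 tpV Vb Vm Vc h])
  have Vm': "V \<in> measurable \<mu> borel" using meas_sets_eq[OF hf(1) Vm] .
  have hm: "h \<in> borel_measurable borel" using h by (rule borel_measurable_continuous_onI)
  have dist: "(\<integral>x. h x \<partial>(distr \<mu> borel V)) = (\<integral>x. h (V x) \<partial>\<mu>)"
    by (rule integral_distr[OF Vm' hm])
  show ?thesis
    using lim dist unfolding J_def[symmetric]
    by (simp add: E_T_line V_def hpe)
qed


end
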